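(* Let $n$ be a positive integer. Let $\alpha,\gamma>0$ be real and $0<\mu\leqq 1$, and suppose that $$\alpha=\beta+\frac{2}{\pi}\arctan(n\beta),\qquad \beta=\gamma+\frac{2}{\pi}\arctan(n\gamma),\qquad \frac{\pi}{2}(\alpha+\gamma)\leqq\phi(\mu),$$ where $$\phi(\mu)=\frac{\pi}{2}(\mu+1)-\arctan\frac{\cos\frac{\mu\pi}{2}}{\sin\frac{\mu\pi}{2}+\frac{n\mu}{1-\mu}\left(\frac{1-\mu}{1+\mu}\right)^{\frac{1+\mu}{2}}}.$$ If $f(z)\in\mathcal{A}_n$ satisfies $$|\arg(f'(z)+zf''(z))|<\frac{\pi}{2}\alpha\qquad(z\in\mathbb{U}),$$ then $f(z)\in\mathcal{STS}(\mu)$, i.e. $\left|\arg\left(\frac{zf'(z)}{f(z)}\right)\right|<\frac{\pi}{2}\mu$ for all $z\in\mathbb{U}$.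
   Context: $\mathbb{U}=\{z\in\mathbb{C}:|z|<1\}$. For a positive integer $n$, $\mathcal{A}_n$ is the class of functions $f(z)=z+a_{n+1}z^{n+1}+a_{n+2}z^{n+2}+\cdots$ analytic in $\mathbb{U}$. For $0<\mu\leqq1$, $\mathcal{STS}(\mu)=\{f\in\mathcal{A}_n:\left|\arg\left(\frac{zf'(z)}{f(z)}\right)\right|<\frac{\pi}{2}\mu \text{ for } z\in\mathbb{U}\}$. $\arg$ denotes the principal argument. *)

theory Defs
  imports "HOL-Complex_Analysis.Complex_Analysis"
begin

text \<open>The class A_n: f analytic in the unit disc with f(z) = z + a_{n+1} z^{n+1} + ...,
  i.e. f(0) = 0, f'(0) = 1 and the k-th derivatives at 0 vanish for 2 <= k <= n.\<close>
definition class_A :: "nat \<Rightarrow> (complex \<Rightarrow> complex) set" where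
  "class_A n = {f. f holomorphic_on ball 0 1 \<and> f 0 = 0 \<and> deriv f 0 = 1 \<and>
                   (\<forall>k\<in>{2..n}. (deriv ^^ k) f 0 = 0)}"

text \<open>Strongly starlike of order mu. The quotient z f'(z)/f(z) must be defined and have an
  argument (nonzero) at every point z of U other than 0 (at z = 0 it equals 1 by continuity).\<close>
definition STS :: "nat \<Rightarrow> real \<Rightarrow> (complex \<Rightarrow> complex) set" where
  "STS n \<mu> = {f \<in> class_A n. \<forall>z\<in>ball 0 1. z \<noteq> 0 \<longrightarrow>
       f z \<noteq> 0 \<and> z * deriv f z / f z \<noteq> 0 \<and> \<bar>Arg (z * deriv f z / f z)\<bar> < pi / 2 * \<mu>}"

definition phi :: "nat \<Rightarrow> real \<Rightarrow> real" where
  "phi n \<mu> = pi / 2 * (\<mu> + 1) -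
     arctan (cos (\<mu> * pi / 2) /
       (sin (\<mu> * pi / 2) + real n * \<mu> / (1 - \<mu>) * ((1 - \<mu>) / (1 + \<mu>)) powr ((1 + \<mu>) / 2)))"

end

theory Submission
  imports Defs
begin



lemma sector_iff:
  assumes "0 < C" "C \<le> pi"
  shows "(w \<noteq> 0 \<and> \<bar>Arg w\<bar> < C) \<longleftrightarrow> Re w > cmod w * cos C"
proof (cases "w = 0")
  case True then show ?thesis by simp
next
  case False
  have re: "Re w = cmod w * cos (Arg w)" using cos_Arg[OF False] False by simp
  have b: "\<bar>Arg w\<bar> \<le> pi" using Arg_bounded[of w] by auto
  have c: "cos (Arg w) = cos \<bar>Arg w\<bar>"
    by (cases "Arg w \<ge> 0") auto
  have m: "cos \<bar>Arg w\<bar> > cos C \<longleftrightarrow> \<bar>Arg w\<bar> < C"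
    using cos_mono_less_eq[of C "\<bar>Arg w\<bar>"] assms b by auto
  have pos: "cmod w > 0" using False by simp
  have e: "Re w > cmod w * cos C \<longleftrightarrow> cos (Arg w) > cos C"
    unfolding re using pos by (rule mult_less_cancel_left_pos)
  show ?thesis unfolding e c m using False by blast
qed

lemma cos_le_range:
  assumes "0 \<le> C" "C \<le> pi" "C \<le> x" "x \<le> 2*pi - C"
  shows "cos x \<le> cos C"
proof (cases "x \<le> pi")
  case True then show ?thesis using cos_monotone_0_pi_le[of C x] assms by auto
next
  case False
  have "cos x = cos (2*pi - x)" by (simp add: cos_diff)
  also have "\<dots> \<le> cos C" using cos_monotone_0_pi_le[of C "2*pi - x"] assms False by auto
  finally show ?thesis .
qed

lemma amgm_mu:
  fixes \<mu> a :: real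
  assumes "0 < \<mu>" "\<mu> < 1" "0 < a"
  shows "a powr \<mu> * (1 / (1 - \<mu>) * ((1 - \<mu>) / (1 + \<mu>)) powr ((1 + \<mu>) / 2)) \<le> (a + 1/a) / 2"
proof -
  define l where "l = (1 + \<mu>)/2"
  define A where "A = 2 * a powr (1 - \<mu>) / (1 + \<mu>)"
  define B where "B = 2 * a powr (-1 - \<mu>) / (1 - \<mu>)"
  have l1: "1 - l = (1 - \<mu>)/2" by (simp add: l_def field_simps)
  have Ap: "0 < A" "0 < B" using assms by (auto simp: A_def B_def)
  have Y: "A powr l * B powr (1 - l) \<le> l * A + (1 - l) * B"
    using Youngs_inequality_0[of l "1 - l" A B] Ap assms by (auto simp: l_def)
  have r1: "l * A = a powr (1 - \<mu>)" using assms by (simp add: l_def A_def)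
  have r2: "(1 - l) * B = a powr (-1 - \<mu>)" using assms unfolding l1 by (simp add: B_def)
  have rhs: "l * A + (1 - l) * B = a powr (1 - \<mu>) + a powr (-1 - \<mu>)"
    using r1 r2 by simp
  have pA: "A powr l = 2 powr l * a powr ((1-\<mu>)*l) / (1+\<mu>) powr l"
    using assms unfolding A_def
    by (simp add: powr_divide powr_mult powr_powr)
  have pB: "B powr (1-l) = 2 powr (1-l) * a powr ((-1-\<mu>)*(1-l)) / (1-\<mu>) powr (1-l)"
    using assms unfolding B_def
    by (simp add: powr_divide powr_mult powr_powr)
  have e0: "(1-\<mu>)*l + (-1-\<mu>)*(1-l) = 0" by (simp add: l1 l_def field_simps)
  have e2: "2 powr l * 2 powr (1 - l) = (2::real)" by (simp flip: powr_add)
  have ea: "a powr ((1-\<mu>)*l) * a powr ((-1-\<mu>)*(1-l)) = 1"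
    using assms by (simp add: e0 flip: powr_add)
  have lhs: "A powr l * B powr (1 - l) = 2 / ((1 + \<mu>) powr l * (1 - \<mu>) powr (1 - l))"
  proof -
    have "A powr l * B powr (1 - l) = (2 powr l * 2 powr (1 - l)) * (a powr ((1-\<mu>)*l) * a powr ((-1-\<mu>)*(1-l)))
          / ((1 + \<mu>) powr l * (1 - \<mu>) powr (1 - l))"
      unfolding pA pB by simp
    then show ?thesis unfolding e2 ea by simp
  qed
  have tgt: "1 / (1 - \<mu>) * ((1 - \<mu>) / (1 + \<mu>)) powr l = 1 / ((1 + \<mu>) powr l * (1 - \<mu>) powr (1 - l))"
  proof -
    have "((1 - \<mu>) / (1 + \<mu>)) powr l = (1 - \<mu>) powr l / (1 + \<mu>) powr l"
      using assms by (simp add: powr_divide)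
    moreover have "(1 - \<mu>) powr l = (1 - \<mu>) * (1 - \<mu>) powr (l - 1)"
      using assms by (simp add: powr_diff)
    moreover have "(1 - \<mu>) powr (1 - l) = 1 / (1 - \<mu>) powr (l - 1)"
      using assms by (simp add: powr_diff)
    ultimately show ?thesis using assms by simp
  qed
  have am: "a powr (1 - \<mu>) + a powr (-1 - \<mu>) = (a + 1/a) / a powr \<mu>"
  proof -
    have "a powr (1 - \<mu>) = a / a powr \<mu>" using assms by (simp add: powr_diff)
    moreover have "a powr (-1 - \<mu>) = (1/a) / a powr \<mu>" using assms by (simp add: powr_diff powr_minus_divide)
    ultimately show ?thesis by (simp add: add_divide_distrib)
  qed
  have P: "0 < (1 + \<mu>) powr l * (1 - \<mu>) powr (1 - l)" using assms by simp
  have "2 / ((1 + \<mu>) powr l * (1 - \<mu>) powr (1 - l)) \<le> (a + 1/a) / a powr \<mu>"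
    using Y lhs rhs am by simp
  then have "a powr \<mu> * (2 / ((1 + \<mu>) powr l * (1 - \<mu>) powr (1 - l))) \<le> a + 1/a"
    using assms by (simp add: divide_simps mult.commute)
  then show ?thesis using tgt by (simp add: l_def)
qed


lemma normsq_vderiv:
  fixes W :: "real \<Rightarrow> complex"
  assumes "(W has_vector_derivative W') (at x)"
  shows "((\<lambda>t. (cmod (W t))^2) has_real_derivative 2 * Re (cnj (W x) * W')) (at x)"
proof -
  have "((\<lambda>t. W t * cnj (W t)) has_vector_derivative (W x * cnj W' + W' * cnj (W x))) (at x)"
    by (rule has_vector_derivative_mult[OF assms has_vector_derivative_cnj[OF assms]])
  then have "((\<lambda>t. Re (W t * cnj (W t))) has_vector_derivative Re (W x * cnj W' + W' * cnj (W x))) (at x)"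
    by (rule bounded_linear.has_vector_derivative[OF bounded_linear_Re])
  moreover have "(\<lambda>t. Re (W t * cnj (W t))) = (\<lambda>t. (cmod (W t))^2)"
    by (rule ext, subst cmod_power2) (simp add: power2_eq_square)
  moreover have "Re (W x * cnj W' + W' * cnj (W x)) = 2 * Re (cnj (W x) * W')"
    by simp
  ultimately show ?thesis
    by (simp add: has_real_derivative_iff_has_vector_derivative algebra_simps)
qed


lemma radial_limit_in_closed:
  fixes F :: "complex \<Rightarrow> 'b::topological_space"
  assumes "continuous_on D F" "open D" "z \<in> D" "0 < cmod z" "closed T"
    and "\<And>w. w \<in> D \<Longrightarrow> cmod w < cmod z \<Longrightarrow> F w \<in> T"
  shows "F z \<in> T"
proof -
  have lim1: "((\<lambda>t. of_real t * z) \<longlongrightarrow> z) (at_left (1::real))"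
  proof -
    have "((\<lambda>t. of_real t * z) \<longlongrightarrow> of_real 1 * z) (at_left (1::real))"
      by (intro tendsto_intros)
    then show ?thesis by simp
  qed
  have cF: "isCont F z" using assms(1,2,3) continuous_on_eq_continuous_at by blast
  have lim2: "((\<lambda>t. F (of_real t * z)) \<longlongrightarrow> F z) (at_left (1::real))"
    using isCont_tendsto_compose[OF cF lim1] .
  have evD: "eventually (\<lambda>t. of_real t * z \<in> D) (at_left (1::real))"
    using lim1 assms(2,3) by (rule topological_tendstoD)
  have ev01: "eventually (\<lambda>t. 0 < t \<and> t < (1::real)) (at_left 1)"
    using eventually_at_left_real[of 0 1] by (auto elim: eventually_mono)
  have "eventually (\<lambda>t. F (of_real t * z) \<in> T) (at_left (1::real))"
    using evD ev01
  proof eventually_elim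
    case (elim t)
    have "cmod (of_real t * z) = t * cmod z" using elim by (simp add: norm_mult)
    also have "\<dots> < cmod z" using elim assms(4) by simp
    finally show ?case using assms(6) elim by blast
  qed
  then show ?thesis
    using Lim_in_closed_set[OF assms(5) _ trivial_limit_at_left_real lim2] by blast
qed


lemma schwarz_n:
  fixes v :: "complex \<Rightarrow> complex"
  assumes r: "0 < r" and hol: "v holomorphic_on ball 0 r"
    and bd: "\<And>z. z \<in> ball 0 r \<Longrightarrow> cmod (z^n * v z) \<le> 1"
    and z: "z \<in> ball 0 r"
  shows "cmod (v z) \<le> 1 / r^n"
proof -
  have main: "cmod (v z) \<le> 1 / \<rho>^n" if "cmod z < \<rho>" "\<rho> < r" for \<rho>
  proof -
    have \<rho>: "0 < \<rho>" using that norm_ge_zero[of z] by linarith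
    have sub: "cball 0 \<rho> \<subseteq> ball 0 r" using that by auto
    show ?thesis
    proof (rule maximum_modulus_frontier[of v "ball 0 \<rho>"])
      have "interior (ball 0 \<rho>) \<subseteq> ball 0 r" using that by auto
      then show "v holomorphic_on interior (ball 0 \<rho>)"
        by (rule holomorphic_on_subset[OF hol])
      have "continuous_on (cball 0 \<rho>) v"
        by (rule continuous_on_subset[OF holomorphic_on_imp_continuous_on[OF hol] sub])
      then show "continuous_on (closure (ball 0 \<rho>)) v"
        using \<rho> by simp
      show "bounded (ball 0 \<rho>)" by simp
      show "z \<in> ball 0 \<rho>" using that by simp
      fix \<zeta> :: complex assume "\<zeta> \<in> frontier (ball 0 \<rho>)"
      then have n\<zeta>: "cmod \<zeta> = \<rho>" using \<rho> by simp
      then have "\<zeta> \<in> ball 0 r" using that by simp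
      then have "cmod \<zeta> ^ n * cmod (v \<zeta>) \<le> 1" using bd by (simp add: norm_mult norm_power)
      then have "\<rho>^n * cmod (v \<zeta>) \<le> 1" using n\<zeta> by simp
      then show "cmod (v \<zeta>) \<le> 1 / \<rho>^n" using \<rho> by (simp add: field_simps)
    qed
  qed
  have lim: "((\<lambda>\<rho>. 1 / \<rho>^n) \<longlongrightarrow> 1 / r^n) (at_left r)"
    using r by (intro tendsto_intros) auto
  have ev: "eventually (\<lambda>\<rho>. cmod (v z) \<le> 1 / \<rho>^n) (at_left r)"
  proof -
    have "cmod z < r" using z by simp
    then have "eventually (\<lambda>\<rho>. \<rho> \<in> {cmod z<..<r}) (at_left r)"
      by (rule eventually_at_left_real)
    then show ?thesis by (rule eventually_mono) (use main in simp)
  qed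
  show ?thesis
    using tendsto_le[OF trivial_limit_at_left_real lim tendsto_const ev] .
qed




lemma jack:
  fixes w :: "complex \<Rightarrow> complex"
  assumes der: "(w has_field_derivative w') (at z0)"
    and w0: "cmod (w z0) = 1"
    and rad: "\<exists>\<eta>>0. \<forall>t. 1 - \<eta> < t \<and> t < 1 \<longrightarrow> cmod (w (of_real t * z0)) \<le> t^n"
    and tan: "\<exists>\<eta>>0. \<forall>s. \<bar>s\<bar> < \<eta> \<longrightarrow> cmod (w (z0 * cis s)) \<le> 1"
  shows "Im (z0 * w' / w z0) = 0 \<and> real n \<le> Re (z0 * w' / w z0)"
proof -
  define \<Lambda> where "\<Lambda> = z0 * w' / w z0"
  have wnz: "w z0 \<noteq> 0" using w0 by auto
  have cw: "cnj (w z0) * w z0 = 1"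
    using w0 by (metis complex_norm_square mult.commute of_real_1 power_one)
  have key: "cnj (w z0) * (z0 * w') = \<Lambda>"
  proof -
    have "z0 * w' = \<Lambda> * w z0" using wnz by (simp add: \<Lambda>_def)
    then have "cnj (w z0) * (z0 * w') = \<Lambda> * (cnj (w z0) * w z0)" by (simp add: mult_ac)
    then show ?thesis using cw by simp
  qed
  have d1: "((\<lambda>x. w (x * z0)) has_field_derivative w' * z0) (at (of_real 1))"
  proof -
    have "((\<lambda>x. x * z0) has_field_derivative z0) (at (of_real 1))"
      by (rule derivative_eq_intros | simp)+
    moreover have "(w has_field_derivative w') (at ((of_real 1) * z0))" using der by simp
    ultimately show ?thesis using DERIV_chain2[where f=w and g="\<lambda>x. x * z0"] by simp
  qed
  have vd1: "((\<lambda>t. w (of_real t * z0)) has_vector_derivative w' * z0) (at 1)"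
    using has_vector_derivative_real_field[OF d1] by simp
  have G: "((\<lambda>t. (cmod (w (of_real t * z0)))^2) has_real_derivative 2 * Re \<Lambda>) (at 1)"
  proof -
    have eq: "cnj (w (of_real 1 * z0)) * (w' * z0) = \<Lambda>"
      using key by (simp add: mult.commute[of w' z0])
    show ?thesis using normsq_vderiv[OF vd1] unfolding eq .
  qed
  have H: "((\<lambda>t. t^(2*n) - (cmod (w (of_real t * z0)))^2) has_real_derivative
            (real (2*n) * 1^(2*n - Suc 0) - 2 * Re \<Lambda>)) (at 1)"
    by (rule DERIV_diff[OF DERIV_pow G])
  have reL: "real n \<le> Re \<Lambda>"
  proof (rule ccontr)
    assume "\<not> real n \<le> Re \<Lambda>"
    then have pos: "0 < real (2*n) * 1^(2*n - Suc 0) - 2 * Re \<Lambda>" by simp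
    obtain d where d: "d > 0" and dd: "\<And>h. h > 0 \<Longrightarrow> h < d \<Longrightarrow>
        (1 - h)^(2*n) - (cmod (w (of_real (1 - h) * z0)))^2 < 1^(2*n) - (cmod (w (of_real 1 * z0)))^2"
      using DERIV_pos_inc_left[OF H pos] by blast
    obtain \<eta> where eta: "\<eta> > 0" and et: "\<And>t. 1 - \<eta> < t \<Longrightarrow> t < 1 \<Longrightarrow> cmod (w (of_real t * z0)) \<le> t^n"
      using rad by blast
    define h where "h = min d \<eta> / 2"
    have h: "h > 0" "h < d" "h < \<eta>" using d eta by (auto simp: h_def)
    have h1: "1 - h < 1" "1 - \<eta> < 1 - h" using h by auto
    have "cmod (w (of_real (1 - h) * z0)) \<le> (1 - h)^n" using et[OF h1(2) h1(1)] .
    then have "(cmod (w (of_real (1 - h) * z0)))^2 \<le> ((1 - h)^n)^2"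
      by (rule power_mono) simp
    then have "0 \<le> (1 - h)^(2*n) - (cmod (w (of_real (1 - h) * z0)))^2"
      by (simp add: power_mult[symmetric] mult.commute)
    moreover have "1^(2*n) - (cmod (w (of_real 1 * z0)))^2 = 0" using w0 by simp
    ultimately show False using dd[OF h(1) h(2)] by linarith
  qed
  have d2: "((\<lambda>x. w (z0 * exp (\<i> * x))) has_field_derivative w' * (z0 * \<i>)) (at (of_real 0))"
  proof -
    have "((\<lambda>x. z0 * exp (\<i> * x)) has_field_derivative z0 * (exp (\<i> * of_real 0) * \<i>)) (at (of_real 0))"
      by (rule derivative_eq_intros refl | simp)+
    then have "((\<lambda>x. z0 * exp (\<i> * x)) has_field_derivative z0 * \<i>) (at (of_real 0))" by simp
    moreover have "(w has_field_derivative w') (at (z0 * exp (\<i> * of_real 0)))" using der by simp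
    ultimately show ?thesis using DERIV_chain2[where f=w and g="\<lambda>x. z0 * exp (\<i> * x)"] by simp
  qed
  have vd2: "((\<lambda>s. w (z0 * exp (\<i> * of_real s))) has_vector_derivative w' * (z0 * \<i>)) (at 0)"
    using has_vector_derivative_real_field[OF d2] by simp
  have K: "((\<lambda>s. (cmod (w (z0 * exp (\<i> * of_real s))))^2) has_real_derivative 2 * Re (\<i> * \<Lambda>)) (at 0)"
  proof -
    have eq: "cnj (w (z0 * exp (\<i> * of_real 0))) * (w' * (z0 * \<i>)) = \<i> * \<Lambda>"
    proof -
      have "cnj (w (z0 * exp (\<i> * of_real 0))) * (w' * (z0 * \<i>)) = \<i> * (cnj (w z0) * (z0 * w'))"
        by (simp add: mult_ac)
      then show ?thesis using key by simp
    qed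
    show ?thesis using normsq_vderiv[OF vd2] unfolding eq .
  qed
  obtain \<eta> where eta: "\<eta> > 0" and et: "\<And>s. \<bar>s\<bar> < \<eta> \<Longrightarrow> cmod (w (z0 * cis s)) \<le> 1"
    using tan by blast
  have "2 * Re (\<i> * \<Lambda>) = 0"
  proof (rule DERIV_local_max[OF K eta], intro allI impI)
    fix y :: real assume "\<bar>0 - y\<bar> < \<eta>"
    then have "cmod (w (z0 * cis y)) \<le> 1" using et by simp
    then have "(cmod (w (z0 * exp (\<i> * of_real y))))^2 \<le> 1"
      by (simp add: cis_conv_exp power_le_one)
    then show "(cmod (w (z0 * exp (\<i> * of_real y))))^2 \<le> (cmod (w (z0 * exp (\<i> * of_real 0))))^2"
      using w0 by simp
  qed
  then have "Im \<Lambda> = 0" by simp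
  then show ?thesis using reL by (simp add: \<Lambda>_def)
qed



lemma sector_closed: "closed {v::complex. cmod v * cos c \<le> Re v}"
  by (intro closed_Collect_le continuous_intros)

lemma sector_scale:
  assumes "cmod v * cos c \<le> Re v" "0 < s"
  shows "cmod (v / of_real s) * cos c \<le> Re (v / of_real s)"
proof -
  have h1: "cmod (v / of_real s) = cmod v / s" using assms by (simp add: norm_divide)
  have h2: "Re (v / of_real s) = Re v / s" by simp
  have "cmod v * cos c / s \<le> Re v / s" by (rule divide_right_mono) (use assms in auto)
  moreover have "cmod v / s * cos c = cmod v * cos c / s" by simp
  ultimately show ?thesis unfolding h1 h2 by simp
qed

lemma norm_one_minus_cis:
  "(cmod (1 - of_real t * cis \<theta>))^2 = 1 - 2 * t * cos \<theta> + t^2"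
proof -
  have "(cmod (1 - of_real t * cis \<theta>))^2 = (1 - t * cos \<theta>)^2 + (t * sin \<theta>)^2"
    by (simp add: cmod_power2)
  also have "\<dots> = (1 - t * cos \<theta>)^2 + (t^2 - (t * cos \<theta>)^2)"
    by (simp add: power_mult_distrib sin_squared_eq algebra_simps)
  also have "\<dots> = 1 - 2 * t * cos \<theta> + t^2"
    by (simp add: power2_eq_square algebra_simps)
  finally show ?thesis .
qed

lemma boundary_nonzero:
  fixes p :: "complex \<Rightarrow> complex"
  assumes hol: "p holomorphic_on ball 0 1" and p0: "p 0 \<noteq> 0" and z0: "z0 \<in> ball 0 1"
    and c: "0 < c" "c < pi/2"
    and cl: "\<And>w. cmod w < cmod z0 \<Longrightarrow> cmod (p w) * cos c \<le> Re (p w)"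
  shows "p z0 \<noteq> 0"
proof
  assume pz: "p z0 = 0"
  have z0nz: "z0 \<noteq> 0" using pz p0 by auto
  have nc: "\<not> p constant_on ball 0 1"
  proof
    assume "p constant_on ball 0 1"
    then obtain k where "\<And>x. x \<in> ball 0 1 \<Longrightarrow> p x = k" by (auto simp: constant_on_def)
    then have "p 0 = p z0" using z0 by (metis centre_in_ball zero_less_one)
    then show False using pz p0 by simp
  qed
  obtain g r m where m: "0 < m" and r: "0 < r" and rb: "ball z0 r \<subseteq> ball 0 1"
      and g: "g holomorphic_on ball z0 r"
      and pg: "\<And>w. w \<in> ball z0 r \<Longrightarrow> p w = (w - z0)^m * g w"
      and gnz: "\<And>w. w \<in> ball z0 r \<Longrightarrow> g w \<noteq> 0"
    using holomorphic_factor_zero_nonconstant[OF hol open_ball connected_ball z0 pz nc] by metis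
  define T where "T = {v::complex. cmod v * cos c \<le> Re v}"
  have Tc: "closed T" unfolding T_def by (rule sector_closed)
  have C: "(-z0 * cis \<theta>)^m * g z0 \<in> T" if th: "\<bar>\<theta>\<bar> < pi/2" for \<theta>
  proof -
    define u where "u = -z0 * cis \<theta>"
    have cth: "0 < cos \<theta>" using th by (intro cos_gt_zero_pi) auto
    define e where "e = min (2 * cos \<theta>) (r / cmod z0)"
    have e: "0 < e" using cth r z0nz by (simp add: e_def)
    have gc: "isCont g z0"
      using continuous_on_interior[OF holomorphic_on_imp_continuous_on[OF g]] r by simp
    have lim0: "((\<lambda>t. z0 + of_real t * u) \<longlongrightarrow> z0 + of_real 0 * u) (at_right (0::real))"
      by (intro tendsto_intros)
    have lim: "((\<lambda>t. u^m * g (z0 + of_real t * u)) \<longlongrightarrow> u^m * g z0) (at_right (0::real))"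
      using isCont_tendsto_compose[OF gc lim0[simplified]] by (intro tendsto_intros)
    have ev: "eventually (\<lambda>t. t \<in> {0<..<e}) (at_right (0::real))"
      using e by (rule eventually_at_right_real)
    have "eventually (\<lambda>t. u^m * g (z0 + of_real t * u) \<in> T) (at_right (0::real))"
      using ev
    proof (rule eventually_mono)
      fix t assume t: "t \<in> {0<..<e}"
      then have t0: "0 < t" and t1: "t < 2 * cos \<theta>" and t2: "t < r / cmod z0"
        by (auto simp: e_def)
      define w where "w = z0 + of_real t * u"
      have "w - z0 = of_real t * u" by (simp add: w_def)
      have nu: "cmod u = cmod z0" by (simp add: u_def norm_mult)
      have wr: "w \<in> ball z0 r"
      proof -
        have "dist z0 w = t * cmod z0" using t0 by (simp add: w_def dist_norm norm_mult nu)
        also have "\<dots> < r" using t2 t0 z0nz by (simp add: field_simps)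
        finally show ?thesis by simp
      qed
      have wz: "w = z0 * (1 - of_real t * cis \<theta>)" by (simp add: w_def u_def algebra_simps)
      have tt: "t * t < t * (2 * cos \<theta>)" using t0 t1 by (simp add: mult_strict_left_mono)
      have "(cmod (1 - of_real t * cis \<theta>))^2 < 1"
        using norm_one_minus_cis[of t \<theta>] tt by (simp add: power2_eq_square)
      then have "cmod (1 - of_real t * cis \<theta>) < 1" by (simp add: power_less_one_iff abs_square_less_1)
      then have wlt: "cmod w < cmod z0" using z0nz by (simp add: wz norm_mult)
      have pw: "p w = of_real (t^m) * (u^m * g w)"
        using pg[OF wr] by (simp add: w_def power_mult_distrib)
      have "p w \<in> T" using cl[OF wlt] by (simp add: T_def)
      then have "p w / of_real (t^m) \<in> T" using t0 sector_scale[of "p w" c "t^m"] by (simp only: T_def mem_Collect_eq zero_less_power)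
      moreover have "p w / of_real (t^m) = u^m * g w" using t0 by (simp add: pw)
      ultimately show "u^m * g (z0 + of_real t * u) \<in> T" by (simp add: w_def)
    qed
    from Lim_in_closed_set[OF Tc this trivial_limit_at_right_real lim]
    show ?thesis by (simp add: u_def)
  qed
  define \<sigma> where "\<sigma> = (c + pi/2)/2"
  have s: "c < \<sigma>" "\<sigma> < pi/2" using c by (auto simp: \<sigma>_def)
  define L0 where "L0 = (-z0)^m * g z0"
  have L0nz: "L0 \<noteq> 0" using z0nz gnz[of z0] r by (simp add: L0_def)
  have rot: "(-z0 * cis \<theta>)^m * g z0 = L0 * cis (real m * \<theta>)" for \<theta>
  proof -
    have "(-z0 * cis \<theta>)^m * g z0 = ((-z0)^m * g z0) * (cis \<theta>)^m"
      by (simp only: power_mult_distrib mult_ac)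
    then show ?thesis by (simp only: L0_def Complex.DeMoivre)
  qed
  have m1: "real m \<ge> 1" using m by simp
  have a1: "\<bar>\<sigma> / real m\<bar> < pi/2" and a2: "\<bar>- \<sigma> / real m\<bar> < pi/2"
  proof -
    have "\<sigma> / real m \<le> \<sigma>" using m1 s c by (simp add: divide_le_eq)
    then have lt: "\<sigma> / real m < pi/2" using s by linarith
    have "0 \<le> \<sigma> / real m" using s c by simp
    then show "\<bar>\<sigma> / real m\<bar> < pi/2" "\<bar>- \<sigma> / real m\<bar> < pi/2" using lt by auto
  qed
  have T1: "L0 * cis \<sigma> \<in> T" using C[OF a1] rot[of "\<sigma> / real m"] m by simp
  have T2: "L0 * cis (-\<sigma>) \<in> T" using C[OF a2] rot[of "- \<sigma> / real m"] m by simp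
  have "cmod L0 * cos c \<le> Re (L0 * cis \<sigma>)" using T1 by (simp add: T_def norm_mult)
  moreover have "cmod L0 * cos c \<le> Re (L0 * cis (-\<sigma>))" using T2 by (simp add: T_def norm_mult)
  ultimately have "2 * (cmod L0 * cos c) \<le> Re (L0 * cis \<sigma>) + Re (L0 * cis (-\<sigma>))" by simp
  also have "\<dots> = 2 * (Re L0 * cos \<sigma>)" by (simp add: cis.code)
  also have "\<dots> \<le> 2 * (cmod L0 * cos \<sigma>)"
  proof -
    have "0 \<le> cos \<sigma>" using s c by (intro cos_ge_zero) auto
    then show ?thesis using complex_Re_le_cmod[of L0] by (simp add: mult_right_mono)
  qed
  finally have "cos c \<le> cos \<sigma>" using L0nz by simp
  moreover have "cos \<sigma> < cos c" using s c by (intro cos_monotone_0_pi) auto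
  ultimately show False by simp
qed




lemma cayley_sq: "(cmod (P + 1))^2 - (cmod (P - 1))^2 = 4 * Re P"
  by (simp only: cmod_power2) (simp add: power2_eq_square algebra_simps)

lemma cayley_le:
  assumes "0 \<le> Re P"
  shows "P + 1 \<noteq> 0" "cmod ((P - 1) / (P + 1)) \<le> 1"
proof -
  show nz: "P + 1 \<noteq> 0"
  proof
    assume h: "P + 1 = 0"
    have "Re (P + 1) = 0" by (simp only: h) simp
    then show False using assms by simp
  qed
  have "(cmod (P - 1))^2 \<le> (cmod (P + 1))^2" using cayley_sq[of P] assms by linarith
  then have "cmod (P - 1) \<le> cmod (P + 1)" by (simp add: power2_le_iff_abs_le)
  then show "cmod ((P - 1) / (P + 1)) \<le> 1" using nz by (simp add: norm_divide divide_le_eq)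
qed

lemma cayley_less:
  assumes "0 < Re P"
  shows "cmod ((P - 1) / (P + 1)) < 1"
proof -
  have nz: "P + 1 \<noteq> 0" using cayley_le[of P] assms by simp
  have "(cmod (P - 1))^2 < (cmod (P + 1))^2" using cayley_sq[of P] assms by linarith
  then have "cmod (P - 1) < cmod (P + 1)" by (rule power2_less_imp_less) simp
  then show ?thesis using nz by (simp add: norm_divide divide_less_eq)
qed

definition Ef :: "complex \<Rightarrow> complex" where
  "Ef u = (if u = 0 then 1 else (exp u - 1) / u)"

lemma Ef_hol: "Ef holomorphic_on UNIV"
proof -
  have h: "(\<lambda>z. if z = 0 then deriv exp 0 else (exp z - exp 0) / (z - 0)) holomorphic_on (UNIV::complex set)"
    by (rule pole_lemma) (auto intro: holomorphic_intros)
  have d: "deriv exp 0 = (1::complex)"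
    using DERIV_imp_deriv[OF DERIV_exp[of "0::complex"]] by simp
  show ?thesis
    by (rule holomorphic_transform[OF h]) (simp add: d Ef_def)
qed

lemma Ef_eq: "exp u - 1 = u * Ef u"
  by (simp add: Ef_def)

lemma Ef_0: "Ef 0 = 1" by (simp add: Ef_def)



lemma part13:
  fixes s a \<delta> :: real and z0 L' :: complex
  assumes s: "s = 1 \<or> s = -1" and a: "0 < a" and d: "0 < \<delta>"
    and P0: "P0 = \<i> * of_real (s * a)"
    and \<Lambda>: "\<Lambda> = z0 * (2 * P0 * (L' / of_real \<delta>) / (P0 + 1)^2) / ((P0 - 1) / (P0 + 1))"
    and im: "Im \<Lambda> = 0"
  shows "z0 * L' = \<i> * of_real (s * (Re \<Lambda> * (a + 1/a) / 2) * \<delta>)"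
proof -
  have nz1: "P0 + 1 \<noteq> 0" and nz2: "P0 - 1 \<noteq> 0"
    using P0 by (auto simp: complex_eq_iff)
  have nz3: "P0 \<noteq> 0" using P0 a s by auto
  have dz: "of_real \<delta> \<noteq> (0::complex)" using d by simp
  have h: "\<Lambda> * ((P0 - 1) / (P0 + 1)) = z0 * (2 * P0 * (L' / of_real \<delta>) / (P0 + 1)^2)"
    using nz1 nz2 by (simp add: \<Lambda>)
  have l1: "\<Lambda> * ((P0 - 1) / (P0 + 1)) * ((P0 + 1)^2 * of_real \<delta>) = \<Lambda> * (P0 - 1) * (P0 + 1) * of_real \<delta>"
    using nz1 by (simp add: power2_eq_square)
  have l2: "z0 * (2 * P0 * (L' / of_real \<delta>) / (P0 + 1)^2) * ((P0 + 1)^2 * of_real \<delta>) = 2 * P0 * (z0 * L')"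
    using nz1 dz by (simp add: power2_eq_square)
  have h2: "\<Lambda> * (P0 - 1) * (P0 + 1) * of_real \<delta> = 2 * P0 * (z0 * L')"
    using h l1 l2 by metis
  have e: "z0 * L' = \<Lambda> * of_real \<delta> * ((P0 - 1) * (P0 + 1)) / (2 * P0)"
    using h2 nz3 by (simp add: field_simps)
  have L: "\<Lambda> = of_real (Re \<Lambda>)" using im by (simp add: complex_eq_iff)
  have P2: "(P0 - 1) * (P0 + 1) = - of_real (a^2 + 1)"
    using s P0 by (auto simp: algebra_simps power2_eq_square)
  define R where "R = Re \<Lambda>"
  have t: "2 * P0 * (\<i> * of_real (s * (R * (a + 1/a) / 2) * \<delta>)) = \<Lambda> * of_real \<delta> * ((P0 - 1) * (P0 + 1))"
  proof -
    have lhs: "2 * P0 * (\<i> * of_real (s * (R * (a + 1/a) / 2) * \<delta>)) = - of_real (s * s * (R * (a*a + 1)) * \<delta>)"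
      using a by (simp add: P0 field_simps)
    have rhs: "\<Lambda> * of_real \<delta> * ((P0 - 1) * (P0 + 1)) = - of_real (R * (a*a + 1) * \<delta>)"
      unfolding P2 by (subst L) (simp add: R_def power2_eq_square algebra_simps)
    have "s * s = 1" using s by auto
    then show ?thesis unfolding lhs rhs by simp
  qed
  show ?thesis
    unfolding e R_def[symmetric] using t nz3 by (simp add: field_simps)
qed



lemma cayley_deriv_aux:
  fixes X M :: complex
  shows "((X * M - 0) * (X + 1) - (X - 1) * (X * M + 0)) / ((X + 1) * (X + 1)) = 2 * X * M / (X + 1)^2"
proof -
  have "(X * M - 0) * (X + 1) - (X - 1) * (X * M + 0) = 2 * X * M" by (simp add: algebra_simps)
  then show ?thesis by (simp add: power2_eq_square)
qed

lemma nunokawa: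
  fixes p q :: "complex \<Rightarrow> complex" and n :: nat and \<delta> :: real
  assumes hp: "p holomorphic_on ball 0 1" and hq: "q holomorphic_on ball 0 1"
    and pq: "\<And>z. z \<in> ball 0 1 \<Longrightarrow> p z = 1 + z^n * q z" and n: "n \<ge> 1"
    and \<delta>: "0 < \<delta>" "\<delta> \<le> 1"
    and nz: "\<delta> < 1 \<or> (\<forall>z\<in>ball 0 1. p z \<noteq> 0)"
    and z1: "z1 \<in> ball 0 1" "\<not> (cmod (p z1) * cos (pi*\<delta>/2) < Re (p z1))"
  obtains z0 a s k where "z0 \<in> ball 0 1" "0 < a" "s = 1 \<or> s = -1" "real n * (a + 1/a)/2 \<le> k"
    "p z0 = of_real (a powr \<delta>) * cis (s * (pi*\<delta>/2))"
    "z0 * deriv p z0 = p z0 * (\<i> * of_real (s * k * \<delta>))"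
    "\<And>z. cmod z < cmod z0 \<Longrightarrow> cmod (p z) * cos (pi*\<delta>/2) < Re (p z)"
proof -
  define c where "c = pi*\<delta>/2"
  have c: "0 < c" "c \<le> pi/2" using \<delta> by (auto simp: c_def)
  have cosc: "cos c < 1"
  proof -
    have "cos c < cos 0" using c by (intro cos_monotone_0_pi) auto
    then show ?thesis by simp
  qed
  have pcont: "continuous_on (ball 0 1) p" using hp by (rule holomorphic_on_imp_continuous_on)
  have p0: "p 0 = 1" using pq[of 0] n by simp
  define K where "K = {z \<in> cball 0 (cmod z1). Re (p z) \<le> cmod (p z) * cos c}"
  have cbsub: "cball 0 (cmod z1) \<subseteq> ball 0 1" using z1 by auto
  have Kc: "compact K"
  proof -
    have "continuous_on (cball 0 (cmod z1)) p" using pcont cbsub by (rule continuous_on_subset)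
    then have "closed K" unfolding K_def
      by (intro continuous_on_closed_Collect_le continuous_intros) auto
    moreover have "bounded K" unfolding K_def by (rule bounded_subset[OF bounded_cball[of 0 "cmod z1"]]) auto
    ultimately show ?thesis by (simp add: compact_eq_bounded_closed)
  qed
  have Kne: "z1 \<in> K" using z1 by (auto simp: K_def c_def)
  obtain z0 where z0K: "z0 \<in> K" and z0min: "\<And>y. y \<in> K \<Longrightarrow> cmod z0 \<le> cmod y"
    using continuous_attains_inf[OF Kc _ continuous_on_norm[OF continuous_on_id]] Kne by blast
  have z0b: "z0 \<in> ball 0 1" and z0le: "cmod z0 \<le> cmod z1" and z0not: "Re (p z0) \<le> cmod (p z0) * cos c"
    using z0K cbsub z1(1) by (auto simp: K_def)
  have inside: "cmod (p z) * cos c < Re (p z)" if "cmod z < cmod z0" for z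
  proof (rule ccontr)
    assume "\<not> cmod (p z) * cos c < Re (p z)"
    then have "z \<in> K" using that z0le by (auto simp: K_def)
    then show False using z0min that by fastforce
  qed
  have z0nz: "z0 \<noteq> 0" using z0not p0 cosc by auto
  define r0 where "r0 = cmod z0"
  have r0: "0 < r0" "r0 < 1" using z0nz z0b by (auto simp: r0_def)
  have closedsec: "cmod (p z) * cos c \<le> Re (p z)" if "cmod z \<le> r0" for z
  proof (cases "z = 0")
    case True then show ?thesis using p0 cosc by simp
  next
    case False
    have zb: "z \<in> ball 0 1" using that r0 by simp
    have "p z \<in> {v. cmod v * cos c \<le> Re v}"
    proof (rule radial_limit_in_closed[OF pcont open_ball zb _ sector_closed[of c]])
      show "0 < cmod z" using False by simp
      fix w assume "w \<in> ball 0 1" "cmod w < cmod z"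
      then have "cmod w < cmod z0" using that by (simp add: r0_def)
      then show "p w \<in> {v. cmod v * cos c \<le> Re v}" using inside[of w] by simp
    qed
    then show ?thesis by simp
  qed
  have z0eq: "Re (p z0) = cmod (p z0) * cos c" using closedsec[of z0] z0not by (simp add: r0_def)
  have pz0: "p z0 \<noteq> 0"
  proof (cases "\<delta> < 1")
    case True
    then have "c < pi/2" by (simp add: c_def)
    then show ?thesis
      using boundary_nonzero[OF hp _ z0b \<open>0 < c\<close>] p0 inside by (auto intro: less_imp_le)
  next
    case False then show ?thesis using nz z0b by auto
  qed
  obtain \<epsilon>0 where e0: "\<epsilon>0 > 0" and e0p: "\<And>y. y \<in> ball 0 1 \<Longrightarrow> dist z0 y < \<epsilon>0 \<Longrightarrow> p y \<noteq> 0"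
    using continuous_on_avoid[OF pcont z0b pz0] by blast
  define \<epsilon> where "\<epsilon> = min \<epsilon>0 (min (1 - r0) r0) / 2"
  have eps: "0 < \<epsilon>" "\<epsilon> < \<epsilon>0" "\<epsilon> < 1 - r0" "\<epsilon> < r0"
    using e0 r0 by (auto simp: \<epsilon>_def)
  have bz0: "ball z0 \<epsilon> \<subseteq> ball 0 1"
  proof
    fix y assume "y \<in> ball z0 \<epsilon>"
    then have "cmod (y - z0) < \<epsilon>" by (simp add: dist_norm norm_minus_commute)
    moreover have "cmod y \<le> cmod z0 + cmod (y - z0)" by (metis norm_triangle_sub add.commute)
    ultimately show "y \<in> ball 0 1" using eps by (simp add: r0_def)
  qed
  define D where "D = ball 0 r0 \<union> ball z0 \<epsilon>"
  have Dopen: "open D" unfolding D_def by (intro open_Un open_ball)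
  have Dsub: "D \<subseteq> ball 0 1" using bz0 r0 by (auto simp: D_def)
  have secnz: "v \<noteq> 0" if "cmod v * cos c < Re v" for v using that by auto
  have pD: "p z \<noteq> 0" if "z \<in> D" for z
  proof (cases "z \<in> ball 0 r0")
    case True then show ?thesis using inside[of z] secnz by (simp add: r0_def)
  next
    case False
    then have "z \<in> ball z0 \<epsilon>" using that by (simp add: D_def)
    then show ?thesis using e0p[of z] bz0 eps by auto
  qed
  have starD: "starlike D"
  proof -
    define x0 where "x0 = of_real (1 - \<epsilon>/(2*r0)) * z0"
    have f: "0 < 1 - \<epsilon>/(2*r0)" using eps r0 by (simp add: field_simps)
    have x01: "x0 \<in> ball 0 r0"
    proof -
      have "cmod x0 = \<bar>1 - \<epsilon>/(2*r0)\<bar> * r0" by (simp only: x0_def norm_mult norm_of_real r0_def)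
      also have "\<dots> = (1 - \<epsilon>/(2*r0)) * r0" using f by simp
      also have "\<dots> = r0 - \<epsilon>/2" using r0 by (simp add: field_simps)
      finally show ?thesis using eps by simp
    qed
    have x02: "x0 \<in> ball z0 \<epsilon>"
    proof -
      have "z0 - x0 = of_real (\<epsilon>/(2*r0)) * z0" by (simp add: x0_def algebra_simps)
      then have "dist z0 x0 = \<bar>\<epsilon>/(2*r0)\<bar> * r0" by (simp only: dist_norm norm_mult norm_of_real r0_def)
      also have "\<dots> = \<epsilon>/(2*r0) * r0" using eps r0 by simp
      also have "\<dots> = \<epsilon>/2" using r0 by simp
      finally show ?thesis using eps by simp
    qed
    show ?thesis unfolding starlike_def
    proof (intro bexI ballI)
      show "x0 \<in> D" using x01 by (simp add: D_def)
      fix y assume "y \<in> D"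
      then consider "y \<in> ball 0 r0" | "y \<in> ball z0 \<epsilon>" by (auto simp: D_def)
      then show "closed_segment x0 y \<subseteq> D"
      proof cases
        case 1 then show ?thesis using closed_segment_subset[OF x01 1 convex_ball] by (auto simp: D_def)
      next
        case 2 then show ?thesis using closed_segment_subset[OF x02 2 convex_ball] by (auto simp: D_def)
      qed
    qed
  qed
  have hpD: "p holomorphic_on D" using hp Dsub by (rule holomorphic_on_subset)
  obtain g where hg: "g holomorphic_on D" and pg: "\<And>z. z \<in> D \<Longrightarrow> p z = exp (g z)"
    using simply_connected_eq_holomorphic_log[OF Dopen] starlike_imp_simply_connected[OF starD] hpD pD
    by blast
  have D0: "0 \<in> D" using r0 by (simp add: D_def)
  define L where "L z = g z - g 0" for z
  have hL: "L holomorphic_on D" unfolding L_def by (intro holomorphic_intros hg)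
  have pL: "p z = exp (L z)" if "z \<in> D" for z
    using pg[OF that] pg[OF D0] p0 by (simp add: L_def exp_diff)
  have L0: "L 0 = 0" by (simp add: L_def)
  have cL: "continuous_on D L" using hL by (rule holomorphic_on_imp_continuous_on)
  have polar: "Re (p z) = exp (Re (L z)) * cos (Im (L z))" "cmod (p z) = exp (Re (L z))" if "z \<in> D" for z
    using pL[OF that] by (simp_all add: Re_exp norm_exp_eq_Re)
  have cosin: "cos c < cos (Im (L z))" if "z \<in> ball 0 r0" for z
  proof -
    have zD: "z \<in> D" using that by (simp add: D_def)
    have "cmod (p z) * cos c < Re (p z)" using inside[of z] that by (simp add: r0_def)
    then show ?thesis using polar[OF zD] by simp
  qed
  have ImL: "\<bar>Im (L z)\<bar> < c" if "z \<in> ball 0 r0" for z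
  proof (rule ccontr)
    assume a: "\<not> \<bar>Im (L z)\<bar> < c"
    define U where "U = (\<lambda>z. Im (L z)) ` ball 0 r0"
    have "continuous_on (ball 0 r0) (\<lambda>z. Im (L z))"
      by (intro continuous_intros continuous_on_subset[OF cL]) (auto simp: D_def)
    then have cU: "connected U" unfolding U_def by (rule connected_continuous_image) simp
    have iv: "\<And>x y w. x \<in> U \<Longrightarrow> y \<in> U \<Longrightarrow> x \<le> w \<Longrightarrow> w \<le> y \<Longrightarrow> w \<in> U"
      by (rule connected_iff_interval[THEN iffD1, OF cU, rule_format])
    have "Im (L 0) \<in> U" unfolding U_def using r0 by simp
    then have 0: "0 \<in> U" using L0 by simp
    have zU: "Im (L z) \<in> U" unfolding U_def using that by simp
    have "c \<in> U \<or> -c \<in> U"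
    proof (cases "Im (L z) \<ge> 0")
      case True
      then have "c \<le> Im (L z)" using a by simp
      then have "c \<in> U" using iv[OF 0 zU, of c] c by simp
      then show ?thesis by simp
    next
      case False
      then have "Im (L z) \<le> -c" using a by simp
      then have "-c \<in> U" using iv[OF zU 0, of "-c"] c by simp
      then show ?thesis by simp
    qed
    then obtain v where v: "v = c \<or> v = -c" "v \<in> U" by blast
    from v(2) obtain z' where z': "z' \<in> ball 0 r0" "v = Im (L z')"
      unfolding U_def by (rule imageE)
    have "cos v = cos c" using v(1) by auto
    then have "cos (Im (L z')) = cos c" using z'(2) by simp
    then show False using cosin[OF z'(1)] by simp
  qed
  have ImLb: "\<bar>Im (L z)\<bar> \<le> c" if "z \<in> ball z0 \<epsilon>" "cmod z \<le> r0" for z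
  proof -
    have zD: "z \<in> D" using that by (simp add: D_def)
    have zpos: "0 < cmod z"
    proof -
      have "cmod (z0 - z) < \<epsilon>" using that by (simp add: dist_norm)
      moreover have "cmod z0 \<le> cmod z + cmod (z0 - z)" by (metis norm_triangle_sub)
      ultimately show ?thesis using eps unfolding r0_def by linarith
    qed
    have "Im (L z) \<in> {-c..c}"
    proof (rule radial_limit_in_closed[OF _ Dopen zD zpos closed_atLeastAtMost])
      show "continuous_on D (\<lambda>z. Im (L z))" by (intro continuous_intros cL)
      fix w assume "w \<in> D" "cmod w < cmod z"
      then have "w \<in> ball 0 r0" using that by simp
      then show "Im (L w) \<in> {-c..c}" using ImL[of w] by auto
    qed
    then show ?thesis by auto
  qed
  have z0D: "z0 \<in> D" using eps by (simp add: D_def)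
  have cz0: "cos (Im (L z0)) = cos c" using z0eq polar[OF z0D] by simp
  have bz0c: "\<bar>Im (L z0)\<bar> = c"
  proof -
    have le: "\<bar>Im (L z0)\<bar> \<le> c" using ImLb[of z0] eps by (simp add: r0_def)
    have "cos \<bar>Im (L z0)\<bar> = cos c" using cz0 by (cases "Im (L z0) \<ge> 0") auto
    moreover have "\<not> \<bar>Im (L z0)\<bar> < c"
    proof
      assume "\<bar>Im (L z0)\<bar> < c"
      then have "cos c < cos \<bar>Im (L z0)\<bar>" using c by (intro cos_monotone_0_pi) auto
      then show False using \<open>cos \<bar>Im (L z0)\<bar> = cos c\<close> by simp
    qed
    ultimately show ?thesis using le by simp
  qed
  define s where "s = Im (L z0) / c"
  have s: "s = 1 \<or> s = -1" and ImLz0: "Im (L z0) = s * c"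
    using bz0c c by (auto simp: s_def abs_if split: if_splits)
  define P where "P z = exp (L z / of_real \<delta>)" for z
  define W where "W z = (P z - 1) / (P z + 1)" for z
  have ReP: "Re (P z) = exp (Re (L z) / \<delta>) * cos (Im (L z) / \<delta>)" for z
    by (simp add: P_def Re_exp)
  have cpi: "c / \<delta> = pi/2" using \<delta> by (simp add: c_def)
  have RePpos: "0 < Re (P z)" if "z \<in> ball 0 r0" for z
  proof -
    have "\<bar>Im (L z)\<bar> / \<delta> < c / \<delta>" using ImL[OF that] \<delta> by (simp add: divide_strict_right_mono)
    then have "\<bar>Im (L z) / \<delta>\<bar> < pi/2" using cpi \<delta> by simp
    then have "- (pi/2) < Im (L z) / \<delta> \<and> Im (L z) / \<delta> < pi/2" by (simp only: abs_less_iff) auto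
    then have "0 < cos (Im (L z) / \<delta>)" by (intro cos_gt_zero_pi) auto
    then show ?thesis unfolding ReP by simp
  qed
  have RePnn: "0 \<le> Re (P z)" if "z \<in> ball z0 \<epsilon>" "cmod z \<le> r0" for z
  proof -
    have "\<bar>Im (L z)\<bar> / \<delta> \<le> c / \<delta>" using ImLb[OF that] \<delta> by (simp add: divide_right_mono)
    then have "\<bar>Im (L z) / \<delta>\<bar> \<le> pi/2" using cpi \<delta> by simp
    then have "- (pi/2) \<le> Im (L z) / \<delta> \<and> Im (L z) / \<delta> \<le> pi/2" by (simp only: abs_le_iff) auto
    then have "0 \<le> cos (Im (L z) / \<delta>)" by (intro cos_ge_zero) auto
    then show ?thesis unfolding ReP by simp
  qed
  have Wlt: "cmod (W z) < 1" if "z \<in> ball 0 r0" for z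
    unfolding W_def using cayley_less[OF RePpos[OF that]] .
  have P1nz: "P z + 1 \<noteq> 0" if "z \<in> ball 0 r0" for z
    using cayley_le(1)[OF less_imp_le[OF RePpos[OF that]]] .
  define a where "a = exp (Re (L z0) / \<delta>)"
  have apos: "0 < a" by (simp add: a_def)
  have cis_s: "cis (s * (pi/2)) = \<i> * of_real s" using s by auto
  have Pz0: "P z0 = \<i> * of_real (s * a)"
  proof -
    have im: "Im (L z0 / of_real \<delta>) = s * (pi/2)" using ImLz0 cpi \<delta> by (simp add: field_simps)
    have re: "Re (L z0 / of_real \<delta>) = Re (L z0) / \<delta>" by simp
    have "P z0 = of_real (exp (Re (L z0 / of_real \<delta>))) * cis (Im (L z0 / of_real \<delta>))"
      unfolding P_def by (rule exp_eq_polar)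
    also have "\<dots> = of_real a * cis (s * (pi/2))" unfolding im re a_def ..
    also have "\<dots> = \<i> * of_real (s * a)" unfolding cis_s by simp
    finally show ?thesis .
  qed
  have W0: "cmod (W z0) = 1"
  proof -
    have re0: "Re (P z0) = 0" using Pz0 by simp
    have nz: "P z0 + 1 \<noteq> 0" using cayley_le(1)[of "P z0"] re0 by simp
    have "(cmod (P z0 - 1))^2 = (cmod (P z0 + 1))^2" using cayley_sq[of "P z0"] re0 by simp
    then have "cmod (P z0 - 1) = cmod (P z0 + 1)" by (simp add: power2_eq_iff_nonneg)
    then show ?thesis using nz by (simp add: W_def norm_divide)
  qed
  have b0D: "ball 0 r0 \<subseteq> D" by (simp add: D_def)
  have b01: "ball 0 r0 \<subseteq> ball 0 1" using r0 by auto
  define ell where "ell z = (if z = 0 then q 0 else L z / z^n)" for z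
  have LE: "L z * Ef (L z) = z^n * q z" if "z \<in> ball 0 r0" for z
  proof -
    have "L z * Ef (L z) = exp (L z) - 1" by (simp add: Ef_eq)
    also have "\<dots> = p z - 1" using pL[of z] b0D that by auto
    also have "\<dots> = z^n * q z"
    proof -
      have "z \<in> ball 0 1" using b01 that by blast
      then show ?thesis using pq[of z] by simp
    qed
    finally show ?thesis .
  qed
  have Ll: "L z = z^n * ell z" if "z \<in> ball 0 r0" for z
    using L0 n by (cases "z = 0") (auto simp: ell_def)
  have hLb: "L holomorphic_on ball 0 r0" using hL b0D by (rule holomorphic_on_subset)
  have hqb: "q holomorphic_on ball 0 r0" using hq b01 by (rule holomorphic_on_subset)
  have hl: "ell holomorphic_on ball 0 r0"
  proof (rule no_isolated_singularity'[where K="{0}"])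
    have "(\<lambda>z. L z / z^n) holomorphic_on (ball 0 r0 - {0})"
      by (intro holomorphic_intros holomorphic_on_subset[OF hLb]) auto
    then show "ell holomorphic_on (ball 0 r0 - {0})"
      by (rule holomorphic_transform) (simp add: ell_def)
    show "open (ball 0 r0)" by simp
    show "finite {0::complex}" by simp
    fix z :: complex assume "z \<in> {0}"
    then have z: "z = 0" by simp
    have cL0: "isCont L 0" using cL Dopen D0 continuous_on_eq_continuous_at by blast
    have cq0: "isCont q 0" using holomorphic_on_imp_continuous_on[OF hq] continuous_on_eq_continuous_at[of "ball 0 1" q] by simp
    have cE: "isCont Ef (L 0)"
      using holomorphic_on_imp_continuous_on[OF Ef_hol] continuous_on_eq_continuous_at[of UNIV Ef] by simp
    have tE: "((\<lambda>z. Ef (L z)) \<longlongrightarrow> Ef (L 0)) (at 0)"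
      using isCont_tendsto_compose[OF cE cL0[unfolded isCont_def]] .
    have EL0: "Ef (L 0) = 1" by (simp add: L0 Ef_0)
    have tq: "((\<lambda>z. q z / Ef (L z)) \<longlongrightarrow> q 0 / Ef (L 0)) (at 0)"
      by (rule tendsto_divide[OF cq0[unfolded isCont_def] tE]) (simp add: EL0)
    have ev1: "eventually (\<lambda>z. Ef (L z) \<noteq> 0) (at 0)"
      using tendsto_imp_eventually_ne[OF tE, of 0] EL0 by simp
    have ev2: "eventually (\<lambda>z. z \<in> ball 0 r0 - {0}) (at 0)"
      using r0 by (intro eventually_at_in_open) auto
    have ev: "eventually (\<lambda>z. q z / Ef (L z) = ell z) (at 0)"
      using ev1 ev2
    proof eventually_elim
      case (elim z)
      then have zb: "z \<in> ball 0 r0" and z0': "z \<noteq> 0" by auto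
      have "L z / z^n = q z / Ef (L z)"
        using LE[OF zb] elim(1) z0' by (simp add: frac_eq_eq mult.commute)
      then show ?case using z0' by (simp add: ell_def)
    qed
    have "(ell \<longlongrightarrow> q 0) (at 0)"
      using Lim_transform_eventually[OF tq ev] EL0 by simp
    then have "(ell \<longlongrightarrow> q 0) (at 0 within ball 0 r0)"
      by (rule tendsto_within_subset) simp
    then show "(ell \<longlongrightarrow> ell z) (at z within ball 0 r0)"
      using z by (simp add: ell_def)
  qed
  define v where "v z = ell z / of_real \<delta> * Ef (L z / of_real \<delta>) / (P z + 1)" for z
  have hEL: "(\<lambda>z. Ef (L z / of_real \<delta>)) holomorphic_on ball 0 r0"
  proof -
    have "(\<lambda>z. L z / of_real \<delta>) holomorphic_on ball 0 r0" using \<delta> by (intro holomorphic_intros hLb) auto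
    then show ?thesis
      using holomorphic_on_compose[of "\<lambda>z. L z / of_real \<delta>" "ball 0 r0" Ef] Ef_hol
      by (auto simp: o_def intro: holomorphic_on_subset)
  qed
  have hP: "P holomorphic_on ball 0 r0" unfolding P_def using \<delta> by (intro holomorphic_intros hLb) auto
  have hv: "v holomorphic_on ball 0 r0"
    unfolding v_def using P1nz \<delta> by (intro holomorphic_intros hl hEL hP) auto
  have Wv: "W z = z^n * v z" if "z \<in> ball 0 r0" for z
  proof -
    have "P z - 1 = (L z / of_real \<delta>) * Ef (L z / of_real \<delta>)" by (simp add: P_def Ef_eq)
    also have "\<dots> = z^n * (ell z / of_real \<delta> * Ef (L z / of_real \<delta>))" using Ll[OF that] by simp
    finally show ?thesis by (simp add: W_def v_def)
  qed
  have vb: "cmod (v z) \<le> 1 / r0^n" if "z \<in> ball 0 r0" for z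
  proof (rule schwarz_n[OF r0(1) hv _ that])
    fix w :: complex assume w: "w \<in> ball 0 r0"
    show "cmod (w^n * v w) \<le> 1" using Wlt[OF w] Wv[OF w] by simp
  qed
  have rad: "\<exists>\<eta>>0. \<forall>t. 1 - \<eta> < t \<and> t < 1 \<longrightarrow> cmod (W (of_real t * z0)) \<le> t^n"
  proof (intro exI[of _ 1] conjI allI impI)
    fix t :: real assume t: "1 - 1 < t \<and> t < 1"
    define z where "z = of_real t * z0"
    have nz: "cmod z = t * r0" using t by (simp add: z_def norm_mult r0_def)
    have zb: "z \<in> ball 0 r0" using nz t r0 by simp
    have "cmod (W z) = (t * r0)^n * cmod (v z)" using Wv[OF zb] nz by (simp add: norm_mult norm_power)
    also have "\<dots> \<le> (t * r0)^n * (1 / r0^n)" using vb[OF zb] t r0 by (intro mult_left_mono) auto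
    also have "\<dots> = t^n" using r0 by (simp add: power_mult_distrib)
    finally show "cmod (W (of_real t * z0)) \<le> t^n" by (simp add: z_def)
  qed (simp)
  have tan: "\<exists>\<eta>>0. \<forall>s. \<bar>s\<bar> < \<eta> \<longrightarrow> cmod (W (z0 * cis s)) \<le> 1"
  proof -
    have ic: "isCont (\<lambda>s::real. z0 * exp (\<i> * of_real s)) 0" by (intro continuous_intros)
    then have "((\<lambda>s::real. z0 * exp (\<i> * of_real s)) \<longlongrightarrow> z0) (at 0)"
      by (simp add: isCont_def)
    then have "eventually (\<lambda>s. z0 * exp (\<i> * of_real s) \<in> ball z0 \<epsilon>) (at (0::real))"
      using eps by (intro topological_tendstoD) auto
    then obtain \<eta> where \<eta>: "\<eta> > 0" and h\<eta>: "\<And>s. s \<noteq> 0 \<Longrightarrow> dist s 0 < \<eta> \<Longrightarrow> z0 * exp (\<i> * of_real s) \<in> ball z0 \<epsilon>"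
      unfolding eventually_at by blast
    show ?thesis
    proof (intro exI[of _ \<eta>] conjI allI impI \<eta>)
      fix s :: real assume "\<bar>s\<bar> < \<eta>"
      then have inb: "z0 * cis s \<in> ball z0 \<epsilon>"
        using h\<eta>[of s] eps by (cases "s = 0") (auto simp: cis_conv_exp)
      have nr: "cmod (z0 * cis s) \<le> r0" by (simp add: norm_mult r0_def)
      show "cmod (W (z0 * cis s)) \<le> 1"
        unfolding W_def using cayley_le(2)[OF RePnn[OF inb nr]] .
    qed
  qed
  define L' where "L' = deriv L z0"
  have hL': "(L has_field_derivative L') (at z0)"
    unfolding L'_def using holomorphic_derivI[OF hL Dopen z0D] .
  have dP: "(P has_field_derivative P z0 * (L' / of_real \<delta>)) (at z0)"
  proof -
    have g: "((\<lambda>z. L z / of_real \<delta>) has_field_derivative L' / of_real \<delta>) (at z0)"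
      by (rule DERIV_cdivide[OF hL'])
    have f: "(exp has_field_derivative exp (L z0 / of_real \<delta>)) (at (L z0 / of_real \<delta>))"
      by (rule DERIV_exp)
    show ?thesis unfolding P_def using DERIV_chain2[where f=exp and g="\<lambda>z. L z / of_real \<delta>", OF f g] .
  qed
  have P0nz: "P z0 + 1 \<noteq> 0" using Pz0 by (simp add: complex_eq_iff)
  define W' where "W' = 2 * P z0 * (L' / of_real \<delta>) / (P z0 + 1)^2"
  have dW: "(W has_field_derivative W') (at z0)"
  proof -
    have d1: "((\<lambda>z. P z - 1) has_field_derivative P z0 * (L' / of_real \<delta>) - 0) (at z0)"
      by (rule DERIV_diff[OF dP DERIV_const])
    have d2: "((\<lambda>z. P z + 1) has_field_derivative P z0 * (L' / of_real \<delta>) + 0) (at z0)"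
      by (rule DERIV_add[OF dP DERIV_const])
    have "(W has_field_derivative
        ((P z0 * (L' / of_real \<delta>) - 0) * (P z0 + 1) - (P z0 - 1) * (P z0 * (L' / of_real \<delta>) + 0)) / ((P z0 + 1) * (P z0 + 1))) (at z0)"
      unfolding W_def by (rule DERIV_divide[OF d1 d2 P0nz])
    moreover have "((P z0 * (L' / of_real \<delta>) - 0) * (P z0 + 1) - (P z0 - 1) * (P z0 * (L' / of_real \<delta>) + 0)) / ((P z0 + 1) * (P z0 + 1)) = W'"
      unfolding W'_def by (rule cayley_deriv_aux)
    ultimately show ?thesis by simp
  qed
  define \<Lambda> where "\<Lambda> = z0 * W' / W z0"
  have J: "Im \<Lambda> = 0 \<and> real n \<le> Re \<Lambda>"
    unfolding \<Lambda>_def by (rule jack[OF dW W0 rad tan])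
  have zL: "z0 * L' = \<i> * of_real (s * (Re \<Lambda> * (a + 1/a) / 2) * \<delta>)"
    by (rule part13[OF s apos \<delta>(1) Pz0 _ conjunct1[OF J]]) (simp add: \<Lambda>_def W'_def W_def)
  define k where "k = Re \<Lambda> * (a + 1/a) / 2"
  have kb: "real n * (a + 1/a) / 2 \<le> k"
  proof -
    have "0 \<le> (a + 1/a) / 2" using apos by simp
    then show ?thesis using conjunct2[OF J] unfolding k_def
      by (metis mult_right_mono times_divide_eq_right)
  qed
  have dp: "(p has_field_derivative p z0 * L') (at z0)"
  proof -
    have "((\<lambda>z. exp (L z)) has_field_derivative exp (L z0) * L') (at z0)"
      by (rule derivative_eq_intros hL' refl)+
    then have "((\<lambda>z. exp (L z)) has_field_derivative p z0 * L') (at z0)" using pL[OF z0D] by simp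
    then show ?thesis
      by (rule has_field_derivative_transform_within_open[OF _ Dopen z0D]) (simp add: pL)
  qed
  have derp: "deriv p z0 = p z0 * L'" using DERIV_imp_deriv[OF dp] .
  have pz0form: "p z0 = of_real (a powr \<delta>) * cis (s * (pi*\<delta>/2))"
  proof -
    have "a powr \<delta> = exp (Re (L z0))" using apos \<delta> by (simp add: powr_def a_def)
    moreover have "p z0 = of_real (exp (Re (L z0))) * cis (Im (L z0))"
      using pL[OF z0D] exp_eq_polar by simp
    ultimately show ?thesis using ImLz0 by (simp add: c_def)
  qed
  show ?thesis
  proof (rule that[OF z0b apos s kb pz0form])
    show "z0 * deriv p z0 = p z0 * (\<i> * of_real (s * k * \<delta>))"
      using zL by (simp add: derp k_def mult_ac)
    fix z assume "cmod z < cmod z0"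
    then show "cmod (p z) * cos (pi*\<delta>/2) < Re (p z)" using inside by (simp add: c_def)
  qed
qed



lemma cis_s_c: "s = 1 \<or> s = -1 \<Longrightarrow> cis (s * c) = Complex (cos c) (s * sin c)"
  by (auto simp: complex_eq_iff)

lemma G1:
  assumes s: "s = 1 \<or> s = -1" and A: "0 < A"
  shows "Re (of_real A * cis (s*c) * (1 + \<i> * of_real (s*t)))
       = cmod (of_real A * cis (s*c) * (1 + \<i> * of_real (s*t))) * cos (c + arctan t)"
proof -
  have ss: "s * s = 1" using s by auto
  have re: "Re (of_real A * cis (s*c) * (1 + \<i> * of_real (s*t))) = A * (cos c - t * sin c)"
    using s by (auto simp: algebra_simps)
  have n1: "cmod (1 + \<i> * of_real (s*t)) = sqrt (1 + t^2)"
  proof -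
    have "cmod (1 + \<i> * of_real (s*t)) = sqrt (1 + (s*t)^2)" by (simp add: cmod_def)
    also have "(s*t)^2 = t^2" using ss by (simp add: power2_eq_square algebra_simps)
    finally show ?thesis .
  qed
  have nm: "cmod (of_real A * cis (s*c) * (1 + \<i> * of_real (s*t))) = A * sqrt (1 + t^2)"
    using A by (simp only: norm_mult n1) simp
  have sq: "0 < sqrt (1 + t^2)" by (simp add: add_pos_nonneg)
  have "cos (c + arctan t) = (cos c - t * sin c) / sqrt (1 + t^2)"
    by (simp add: cos_add cos_arctan sin_arctan diff_divide_distrib)
  then show ?thesis unfolding re nm using sq by simp
qed

lemma G2:
  assumes s: "s = 1 \<or> s = -1" and A: "0 < A" and t: "0 \<le> t" and c: "0 < c" "c \<le> pi/2"
    and u: "u \<noteq> 0"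
  defines "\<theta> \<equiv> pi/2 - arctan (A * cos c / (A * sin c + t))"
  shows "Re (u * (of_real A * cis (s*c) * (of_real A * cis (s*c) + \<i> * of_real (s*t))))
       = cmod (u * (of_real A * cis (s*c) * (of_real A * cis (s*c) + \<i> * of_real (s*t)))) * cos (s * Arg u + c + \<theta>)"
proof -
  define x where "x = A * cos c"
  define y where "y = A * sin c + t"
  have sc: "0 < sin c" using c by (intro sin_gt_zero) auto
  have y: "0 < y" using A sc t by (simp add: y_def add_pos_nonneg)
  define R where "R = sqrt (x^2 + y^2)"
  have R: "0 < R" using y by (simp add: R_def add_nonneg_pos)
  have sqq: "sqrt (1 + (x/y)^2) = R / y"
  proof -
    have "1 + (x/y)^2 = (x^2 + y^2) / y^2" using y by (simp add: field_simps power2_eq_square)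
    then have "sqrt (1 + (x/y)^2) = sqrt (x^2 + y^2) / sqrt (y^2)" by (simp add: real_sqrt_divide)
    then show ?thesis using y by (simp add: R_def)
  qed
  have cth: "cos \<theta> = x / R"
  proof -
    have "cos \<theta> = sin (arctan (x/y))" by (simp add: \<theta>_def x_def y_def cos_diff)
    also have "\<dots> = (x/y) / (R/y)" by (simp add: sin_arctan sqq)
    also have "\<dots> = x / R" using y by simp
    finally show ?thesis .
  qed
  have sth: "sin \<theta> = y / R"
  proof -
    have "sin \<theta> = cos (arctan (x/y))" by (simp add: \<theta>_def x_def y_def sin_diff)
    also have "\<dots> = 1 / (R/y)" by (simp add: cos_arctan sqq)
    also have "\<dots> = y / R" using y by simp
    finally show ?thesis .
  qed
  have X: "of_real A * cis (s*c) + \<i> * of_real (s*t) = of_real R * cis (s * \<theta>)"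
  proof -
    have "of_real R * cis (s * \<theta>) = Complex (R * cos \<theta>) (R * (s * sin \<theta>))"
      using cis_s_c[OF s, of \<theta>] by (simp add: complex_eq_iff)
    also have "\<dots> = Complex x (s * y)" using R by (simp add: cth sth)
    also have "\<dots> = of_real A * cis (s*c) + \<i> * of_real (s*t)"
      using cis_s_c[OF s, of c] by (simp add: complex_eq_iff x_def y_def algebra_simps)
    finally show ?thesis by simp
  qed
  have U: "u = of_real (cmod u) * cis (Arg u)" using rcis_cmod_Arg[of u] by (simp add: rcis_def)
  define K where "K = cmod u * A * R"
  have K: "0 < K" using u A R by (simp add: K_def)
  have prod: "u * (of_real A * cis (s*c) * (of_real A * cis (s*c) + \<i> * of_real (s*t)))
      = of_real K * cis (Arg u + s * c + s * \<theta>)"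
  proof -
    have "u * (of_real A * cis (s*c) * (of_real A * cis (s*c) + \<i> * of_real (s*t)))
        = (of_real (cmod u) * cis (Arg u)) * (of_real A * cis (s*c) * (of_real R * cis (s * \<theta>)))"
      using U X by simp
    also have "\<dots> = of_real K * (cis (Arg u) * cis (s*c) * cis (s * \<theta>))"
      by (simp add: K_def mult_ac)
    also have "\<dots> = of_real K * cis (Arg u + s * c + s * \<theta>)" by (simp add: cis_mult)
    finally show ?thesis .
  qed
  have cosx: "cos (Arg u + s * c + s * \<theta>) = cos (s * Arg u + c + \<theta>)"
  proof (cases "s = 1")
    case True then show ?thesis by simp
  next
    case False
    then have "s = -1" using s by simp
    then show ?thesis using cos_minus[of "Arg u - c - \<theta>"] by (simp add: algebra_simps)
  qed
  show ?thesis unfolding prod using K by (simp add: norm_mult cosx)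
qed



lemma factor_ball:
  fixes F :: "complex \<Rightarrow> complex"
  assumes holf: "F holomorphic_on ball 0 r"
      and dfz: "\<And>i. i < m \<Longrightarrow> (deriv ^^ i) F 0 = 0"
  obtains g where "g holomorphic_on ball 0 r" "\<And>w. w \<in> ball 0 r \<Longrightarrow> F w = w^m * g w"
proof -
  define g where "g w = suminf (\<lambda>i. (deriv ^^ (i + m)) F 0 / (fact(i + m)) * w^i)" for w
  have sumsg: "(\<lambda>i. (deriv ^^ (i + m)) F 0 / (fact(i + m)) * w^i) sums g w"
   and feq: "F w = w^m * g w"
       if w: "w \<in> ball 0 r" for w
  proof -
    define powf where "powf = (\<lambda>i. (deriv ^^ i) F 0/(fact i) * w^i)"
    have "powf sums F w"
      unfolding powf_def using holomorphic_power_series [OF holf w] by simp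
    moreover have "(\<Sum>i<m. powf i) = 0"
      by (rule sum.neutral) (simp add: powf_def dfz)
    ultimately have fsums: "(\<lambda>i. powf (i+m)) sums F w"
      using w sums_iff_shift'[of powf m "F w"] by simp
    then have *: "summable (\<lambda>i. w ^ m * ((deriv ^^ (i + m)) F 0 * w ^ i / fact (i + m)))"
      unfolding powf_def using sums_summable
      by (auto simp: power_add mult_ac)
    have "summable (\<lambda>i. (deriv ^^ (i + m)) F 0 * w ^ i / fact (i + m))"
    proof (cases "w=0")
      case False then show ?thesis
        using summable_mult [OF *, of "1 / w ^ m"] by simp
    next
      case True then show ?thesis
        by (auto simp: Power.semiring_1_class.power_0_left intro!: summable_finite [of "{0}"]
                 split: if_split_asm)
    qed
    then show sumsg: "(\<lambda>i. (deriv ^^ (i + m)) F 0 / (fact(i + m)) * w^i) sums g w"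
      by (simp add: summable_sums_iff g_def)
    show "F w = w^m * g w"
      using sums_mult [OF sumsg, of "w ^ m"]
      by (intro sums_unique2 [OF fsums]) (auto simp: power_add mult_ac powf_def)
  qed
  have "g holomorphic_on ball 0 r"
    using sumsg power_series_holomorphic[of 0 r "\<lambda>i. (deriv ^^ (i + m)) F 0 / (fact(i + m))" g] by simp
  then show ?thesis using that feq by blast
qed



lemma a_plus_inv: "0 < a \<Longrightarrow> 2 \<le> a + 1/(a::real)"
proof -
  assume a: "0 < a"
  have "0 \<le> (a - 1)^2" by simp
  then have "2 * a \<le> a * a + 1" by (simp add: power2_eq_square algebra_simps)
  then show ?thesis using a by (simp add: field_simps)
qed

theorem theorem1:
  fixes n :: nat and \<alpha> \<beta> \<gamma> \<mu> :: real and f :: "complex \<Rightarrow> complex"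
  assumes "n \<ge> 1"
    and "\<alpha> > 0" and "\<gamma> > 0" and "0 < \<mu>" and "\<mu> \<le> 1"
    and "\<alpha> = \<beta> + 2 / pi * arctan (real n * \<beta>)"
    and "\<beta> = \<gamma> + 2 / pi * arctan (real n * \<gamma>)"
    and "pi / 2 * (\<alpha> + \<gamma>) \<le> phi n \<mu>"
    and "f \<in> class_A n"
    and "\<forall>z\<in>ball 0 1. deriv f z + z * (deriv ^^ 2) f z \<noteq> 0 \<and>
                       \<bar>Arg (deriv f z + z * (deriv ^^ 2) f z)\<bar> < pi / 2 * \<alpha>"
  shows "f \<in> STS n \<mu>"
proof -
  note n = assms(1) and \<alpha>0 = assms(2) and \<gamma>0 = assms(3) and \<mu> = assms(4,5)
    and \<alpha>def = assms(6) and \<beta>def = assms(7) and phiA = assms(8) and fA = assms(9) and hyp0 = assms(10)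
  have hf: "f holomorphic_on ball 0 1" and f0: "f 0 = 0" and df0: "deriv f 0 = 1"
    and dk: "\<And>k. k \<in> {2..n} \<Longrightarrow> (deriv ^^ k) f 0 = 0"
    using fA by (auto simp: class_A_def)
  define Cc where "Cc = real n * \<mu> / (1 - \<mu>) * ((1 - \<mu>) / (1 + \<mu>)) powr ((1 + \<mu>) / 2)"
  have Cc0: "0 \<le> Cc" unfolding Cc_def using \<mu> by (intro mult_nonneg_nonneg divide_nonneg_nonneg) auto
  have phidef: "phi n \<mu> = pi / 2 * (\<mu> + 1) - arctan (cos (\<mu> * pi / 2) / (sin (\<mu> * pi / 2) + Cc))"
    by (simp add: phi_def Cc_def)
  have mp: "0 \<le> \<mu> * pi" "\<mu> * pi \<le> pi" using \<mu> by auto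
  have cmu: "0 \<le> cos (\<mu> * pi / 2)" by (intro cos_ge_zero) (use mp pi_gt_zero in linarith)+
  have smu: "0 < sin (\<mu> * pi / 2)" using \<mu> by (intro sin_gt_zero) auto
  have phile: "phi n \<mu> \<le> pi / 2 * (\<mu> + 1)"
  proof -
    have "0 \<le> cos (\<mu> * pi / 2) / (sin (\<mu> * pi / 2) + Cc)" using cmu smu Cc0 by simp
    then show ?thesis unfolding phidef by (simp add: zero_le_arctan_iff)
  qed
  have ag2: "\<alpha> + \<gamma> \<le> 2"
  proof -
    have "pi / 2 * (\<alpha> + \<gamma>) \<le> pi / 2 * (\<mu> + 1)" using phiA phile by linarith
    then have "\<alpha> + \<gamma> \<le> \<mu> + 1" by simp
    then show ?thesis using \<mu> by linarith
  qed
  have at\<gamma>: "0 < arctan (real n * \<gamma>)" using n \<gamma>0 by (simp add: arctan_less_zero_iff)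
  have \<beta>\<gamma>: "\<gamma> < \<beta>" using at\<gamma> \<beta>def by simp
  have \<beta>0: "0 < \<beta>" using \<beta>\<gamma> \<gamma>0 by simp
  have at\<beta>: "0 < arctan (real n * \<beta>)" using n \<beta>0 by (simp add: arctan_less_zero_iff)
  have \<alpha>\<beta>: "\<beta> < \<alpha>" using at\<beta> \<alpha>def by simp
  have \<alpha>2: "\<alpha> < 2" using ag2 \<gamma>0 by simp
  have \<beta>1: "\<beta> < 1"
  proof (rule ccontr)
    assume "\<not> \<beta> < 1"
    then have b1: "1 \<le> \<beta>" by simp
    have "arctan (real n) \<le> arctan (real n * \<beta>)"
      using b1 n by (intro arctan_monotone') (simp add: mult_le_cancel_left1)
    then have "2 / pi * arctan (real n) \<le> 2 / pi * arctan (real n * \<beta>)" by (rule mult_left_mono) simp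
    then have a1: "1 + 2 / pi * arctan (real n) \<le> \<alpha>" using \<alpha>def b1 by linarith
    show False
    proof (cases "\<gamma> < 1")
      case True
      have "arctan (real n * \<gamma>) < arctan (real n)"
        using True n \<gamma>0 by (intro arctan_monotone) simp
      then have "2 / pi * arctan (real n * \<gamma>) < 2 / pi * arctan (real n)" by (rule mult_strict_left_mono) simp
      then show False using a1 ag2 b1 \<beta>def by linarith
    next
      case False
      have "0 < arctan (real n)" using n by (simp add: arctan_less_zero_iff)
      then show False using a1 ag2 False by (smt (verit) divide_pos_pos mult_pos_pos pi_gt_zero)
    qed
  qed
  have \<gamma>1: "\<gamma> < 1" using \<beta>\<gamma> \<beta>1 by simp
  have hyp: "cmod (deriv f z + z * deriv (deriv f) z) * cos (pi / 2 * \<alpha>) < Re (deriv f z + z * deriv (deriv f) z)"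
    if "z \<in> ball 0 1" for z
  proof -
    have d2: "(deriv ^^ 2) f = deriv (deriv f)" by (simp add: numeral_2_eq_2)
    have "0 < pi / 2 * \<alpha>" "pi / 2 * \<alpha> \<le> pi" using \<alpha>0 \<alpha>2 by auto
    then show ?thesis using sector_iff[of "pi / 2 * \<alpha>"] hyp0 that d2 by auto
  qed
  obtain m where nm: "n = Suc m" using n by (cases n) auto
  have hF: "(\<lambda>w. f w - w) holomorphic_on ball 0 1" by (intro holomorphic_intros hf)
  have dF: "(deriv ^^ i) (\<lambda>w. f w - w) 0 = 0" if "i < n + 1" for i
  proof -
    have "(deriv ^^ i) (\<lambda>w. f w - w) 0 = (deriv ^^ i) f 0 - (deriv ^^ i) (\<lambda>w. w) 0"
      by (rule higher_deriv_diff[OF hf _ open_ball]) (auto intro: holomorphic_intros)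
    also have "\<dots> = 0"
    proof (cases "i = 0")
      case True then show ?thesis by (simp add: f0)
    next
      case False
      show ?thesis
      proof (cases "i = 1")
        case True then show ?thesis by (simp add: df0)
      next
        case False
        then have "i \<in> {2..n}" using \<open>i \<noteq> 0\<close> that by auto
        then show ?thesis using dk[of i] False \<open>i \<noteq> 0\<close> by (simp add: higher_deriv_ident)
      qed
    qed
    finally show ?thesis .
  qed
  obtain h where hh: "h holomorphic_on ball 0 1" and fh0: "\<And>w. w \<in> ball 0 1 \<Longrightarrow> f w - w = w^(n+1) * h w"
    using factor_ball[OF hF dF] by blast
  define p2 where "p2 = (\<lambda>w. 1 + w^n * h w)"
  have fp2: "f w = w * p2 w" if "w \<in> ball 0 1" for w
    using fh0[OF that] by (simp add: p2_def algebra_simps)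
  have hp2: "p2 holomorphic_on ball 0 1" unfolding p2_def by (intro holomorphic_intros hh)
  have hdh: "deriv h holomorphic_on ball 0 1" by (rule holomorphic_deriv[OF hh open_ball])
  have Dp2: "z * deriv p2 z = z^n * (of_nat n * h z + z * deriv h z)" if "z \<in> ball 0 1" for z
  proof -
    have dh: "(h has_field_derivative deriv h z) (at z)" by (rule holomorphic_derivI[OF hh open_ball that])
    have "((\<lambda>x. x^n * h x) has_field_derivative of_nat n * (1 * z^(n - Suc 0)) * h z + deriv h z * z^n) (at z)"
      by (rule DERIV_mult[OF DERIV_power[OF DERIV_ident] dh])
    then have "(p2 has_field_derivative 0 + (of_nat n * (1 * z^(n - Suc 0)) * h z + deriv h z * z^n)) (at z)"
      unfolding p2_def by (rule DERIV_add[OF DERIV_const])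
    then have "deriv p2 z = of_nat n * z^m * h z + deriv h z * z^n" by (simp add: DERIV_imp_deriv nm)
    then show ?thesis by (simp add: nm algebra_simps)
  qed
  have Df: "deriv f z = p2 z + z * deriv p2 z" if "z \<in> ball 0 1" for z
  proof -
    have dp: "(p2 has_field_derivative deriv p2 z) (at z)" by (rule holomorphic_derivI[OF hp2 open_ball that])
    have "((\<lambda>w. w * p2 w) has_field_derivative 1 * p2 z + deriv p2 z * z) (at z)"
      by (rule DERIV_mult[OF DERIV_ident dp])
    then have "(f has_field_derivative 1 * p2 z + deriv p2 z * z) (at z)"
      by (rule has_field_derivative_transform_within_open[OF _ open_ball that]) (simp add: fp2)
    then show ?thesis by (simp add: DERIV_imp_deriv mult.commute)
  qed
  define q1 where "q1 = (\<lambda>w. (of_nat n + 1) * h w + w * deriv h w)"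
  have Df1: "deriv f z = 1 + z^n * q1 z" if "z \<in> ball 0 1" for z
    using Df[OF that] Dp2[OF that] by (simp add: p2_def q1_def algebra_simps)
  have hq1: "q1 holomorphic_on ball 0 1" unfolding q1_def by (intro holomorphic_intros hh hdh)
  have hDf: "deriv f holomorphic_on ball 0 1" by (rule holomorphic_deriv[OF hf open_ball])
  have S1: "cmod (deriv f z) * cos (pi*\<beta>/2) < Re (deriv f z)" if zb: "z \<in> ball 0 1" for z
  proof (rule ccontr)
    assume nz1: "\<not> cmod (deriv f z) * cos (pi*\<beta>/2) < Re (deriv f z)"
    have disj: "\<beta> < 1 \<or> (\<forall>z\<in>ball 0 1. deriv f z \<noteq> 0)" using \<beta>1 by simp
    obtain z0 a s k where z0: "z0 \<in> ball 0 1" and apos: "0 < a" and s: "s = 1 \<or> s = -1"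
      and k: "real n * (a + 1/a)/2 \<le> k"
      and pz: "deriv f z0 = of_real (a powr \<beta>) * cis (s * (pi*\<beta>/2))"
      and dz: "z0 * deriv (deriv f) z0 = deriv f z0 * (\<i> * of_real (s * k * \<beta>))"
      and ins: "\<And>z. cmod z < cmod z0 \<Longrightarrow> cmod (deriv f z) * cos (pi*\<beta>/2) < Re (deriv f z)"
      using nunokawa[OF hDf hq1 Df1 n \<beta>0 less_imp_le[OF \<beta>1] disj zb nz1] by metis
    define w where "w = deriv f z0 + z0 * deriv (deriv f) z0"
    have w: "w = of_real (a powr \<beta>) * cis (s * (pi*\<beta>/2)) * (1 + \<i> * of_real (s * (k * \<beta>)))"
      unfolding w_def dz pz by (simp add: algebra_simps)
    have Rw: "Re w = cmod w * cos (pi*\<beta>/2 + arctan (k * \<beta>))"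
      unfolding w using apos by (intro G1[OF s]) simp
    have kn: "real n \<le> k"
    proof -
      have "real n * 1 \<le> real n * ((a + 1/a)/2)" using a_plus_inv[OF apos] by (intro mult_left_mono) auto
      then show ?thesis using k by simp
    qed
    have cb: "cos (pi*\<beta>/2 + arctan (k * \<beta>)) \<le> cos (pi / 2 * \<alpha>)"
    proof (rule cos_le_range)
      show "0 \<le> pi / 2 * \<alpha>" "pi / 2 * \<alpha> \<le> pi" using \<alpha>0 \<alpha>2 by auto
      have "arctan (real n * \<beta>) \<le> arctan (k * \<beta>)"
        using kn \<beta>0 by (intro arctan_monotone' mult_right_mono) auto
      moreover have "pi / 2 * \<alpha> = pi*\<beta>/2 + arctan (real n * \<beta>)" using \<alpha>def by (simp add: field_simps)
      ultimately show "pi / 2 * \<alpha> \<le> pi*\<beta>/2 + arctan (k * \<beta>)" by simp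
      have "pi*\<beta>/2 < pi/2" using \<beta>1 by simp
      then have "pi*\<beta>/2 + arctan (k * \<beta>) \<le> pi" using arctan_ubound[of "k * \<beta>"] by linarith
      then show "pi*\<beta>/2 + arctan (k * \<beta>) \<le> 2 * pi - pi / 2 * \<alpha>" using \<open>pi / 2 * \<alpha> \<le> pi\<close> by linarith
    qed
    have "Re w \<le> cmod w * cos (pi / 2 * \<alpha>)" unfolding Rw by (rule mult_left_mono[OF cb norm_ge_zero])
    then show False using hyp[OF z0] by (simp add: w_def)
  qed
  have eqp2: "p2 z = 1 + z^n * h z" if "z \<in> ball 0 1" for z by (simp add: p2_def)
  have S2: "cmod (p2 z) * cos (pi*\<gamma>/2) < Re (p2 z)" if zb: "z \<in> ball 0 1" for z
  proof (rule ccontr)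
    assume nz1: "\<not> cmod (p2 z) * cos (pi*\<gamma>/2) < Re (p2 z)"
    have disj: "\<gamma> < 1 \<or> (\<forall>z\<in>ball 0 1. p2 z \<noteq> 0)" using \<gamma>1 by simp
    obtain z0 a s k where z0: "z0 \<in> ball 0 1" and apos: "0 < a" and s: "s = 1 \<or> s = -1"
      and k: "real n * (a + 1/a)/2 \<le> k"
      and pz: "p2 z0 = of_real (a powr \<gamma>) * cis (s * (pi*\<gamma>/2))"
      and dz: "z0 * deriv p2 z0 = p2 z0 * (\<i> * of_real (s * k * \<gamma>))"
      and ins: "\<And>z. cmod z < cmod z0 \<Longrightarrow> cmod (p2 z) * cos (pi*\<gamma>/2) < Re (p2 z)"
      using nunokawa[OF hp2 hh eqp2 n \<gamma>0 less_imp_le[OF \<gamma>1] disj zb nz1] by metis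
    define w where "w = deriv f z0"
    have w: "w = of_real (a powr \<gamma>) * cis (s * (pi*\<gamma>/2)) * (1 + \<i> * of_real (s * (k * \<gamma>)))"
      unfolding w_def Df[OF z0] dz pz by (simp add: algebra_simps)
    have Rw: "Re w = cmod w * cos (pi*\<gamma>/2 + arctan (k * \<gamma>))"
      unfolding w using apos by (intro G1[OF s]) simp
    have kn: "real n \<le> k"
    proof -
      have "real n * 1 \<le> real n * ((a + 1/a)/2)" using a_plus_inv[OF apos] by (intro mult_left_mono) auto
      then show ?thesis using k by simp
    qed
    have cb: "cos (pi*\<gamma>/2 + arctan (k * \<gamma>)) \<le> cos (pi*\<beta>/2)"
    proof (rule cos_le_range)
      show "0 \<le> pi*\<beta>/2" "pi*\<beta>/2 \<le> pi" using \<beta>0 \<beta>1 by auto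
      have "arctan (real n * \<gamma>) \<le> arctan (k * \<gamma>)"
        using kn \<gamma>0 by (intro arctan_monotone' mult_right_mono) auto
      moreover have "pi*\<beta>/2 = pi*\<gamma>/2 + arctan (real n * \<gamma>)" using \<beta>def by (simp add: field_simps)
      ultimately show "pi*\<beta>/2 \<le> pi*\<gamma>/2 + arctan (k * \<gamma>)" by simp
      have "pi*\<gamma>/2 < pi/2" using \<gamma>1 by simp
      then have "pi*\<gamma>/2 + arctan (k * \<gamma>) \<le> pi" using arctan_ubound[of "k * \<gamma>"] by linarith
      then show "pi*\<gamma>/2 + arctan (k * \<gamma>) \<le> 2 * pi - pi*\<beta>/2" using \<open>pi*\<beta>/2 \<le> pi\<close> by linarith
    qed
    have "Re w \<le> cmod w * cos (pi*\<beta>/2)" unfolding Rw by (rule mult_left_mono[OF cb norm_ge_zero])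
    then show False using S1[OF z0] by (simp add: w_def)
  qed
  have p2nz: "p2 z \<noteq> 0" if "z \<in> ball 0 1" for z using S2[OF that] by auto
  have dfnz: "deriv f z \<noteq> 0" if "z \<in> ball 0 1" for z using S1[OF that] by auto
  define p3 where "p3 = (\<lambda>z. deriv f z / p2 z)"
  define q3 where "q3 = (\<lambda>z. (of_nat n * h z + z * deriv h z) / p2 z)"
  have eqp3: "p3 z = 1 + z^n * q3 z" if "z \<in> ball 0 1" for z
  proof -
    have "deriv f z = p2 z + z^n * (of_nat n * h z + z * deriv h z)" using Df[OF that] Dp2[OF that] by simp
    then show ?thesis using p2nz[OF that] by (simp add: p3_def q3_def field_simps)
  qed
  have hp3: "p3 holomorphic_on ball 0 1" unfolding p3_def using p2nz by (intro holomorphic_intros hDf hp2) auto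
  have hq3: "q3 holomorphic_on ball 0 1" unfolding q3_def using p2nz by (intro holomorphic_intros hh hdh hp2) auto
  have p3nz: "p3 z \<noteq> 0" if "z \<in> ball 0 1" for z using dfnz[OF that] p2nz[OF that] by (simp add: p3_def)
  have S3: "cmod (p3 z) * cos (pi*\<mu>/2) < Re (p3 z)" if zb: "z \<in> ball 0 1" for z
  proof (rule ccontr)
    assume nz1: "\<not> cmod (p3 z) * cos (pi*\<mu>/2) < Re (p3 z)"
    have disj: "\<mu> < 1 \<or> (\<forall>z\<in>ball 0 1. p3 z \<noteq> 0)" using p3nz by simp
    obtain z0 a s k where z0: "z0 \<in> ball 0 1" and apos: "0 < a" and s: "s = 1 \<or> s = -1"
      and k: "real n * (a + 1/a)/2 \<le> k"
      and pz: "p3 z0 = of_real (a powr \<mu>) * cis (s * (pi*\<mu>/2))"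
      and dz: "z0 * deriv p3 z0 = p3 z0 * (\<i> * of_real (s * k * \<mu>))"
      and ins: "\<And>z. cmod z < cmod z0 \<Longrightarrow> cmod (p3 z) * cos (pi*\<mu>/2) < Re (p3 z)"
      using nunokawa[OF hp3 hq3 eqp3 n \<mu>(1) \<mu>(2) disj zb nz1] by metis
    have ddf: "deriv (deriv f) z0 = deriv p2 z0 * p3 z0 + deriv p3 z0 * p2 z0"
    proof -
      have dp2: "(p2 has_field_derivative deriv p2 z0) (at z0)" by (rule holomorphic_derivI[OF hp2 open_ball z0])
      have dp3: "(p3 has_field_derivative deriv p3 z0) (at z0)" by (rule holomorphic_derivI[OF hp3 open_ball z0])
      have "((\<lambda>w. p2 w * p3 w) has_field_derivative deriv p2 z0 * p3 z0 + deriv p3 z0 * p2 z0) (at z0)"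
        by (rule DERIV_mult[OF dp2 dp3])
      then have "(deriv f has_field_derivative deriv p2 z0 * p3 z0 + deriv p3 z0 * p2 z0) (at z0)"
        by (rule has_field_derivative_transform_within_open[OF _ open_ball z0]) (simp add: p3_def p2nz)
      then show ?thesis by (rule DERIV_imp_deriv)
    qed
    have e2: "deriv f z0 = p2 z0 * p3 z0" using p2nz[OF z0] by (simp add: p3_def)
    have e1: "z0 * deriv p2 z0 = p2 z0 * p3 z0 - p2 z0" using Df[OF z0] e2 by simp
    define w where "w = deriv f z0 + z0 * deriv (deriv f) z0"
    define A where "A = a powr \<mu>"
    define t where "t = k * \<mu>"
    define c where "c = pi*\<mu>/2"
    have w1: "w = p2 z0 * p3 z0 + (z0 * deriv p2 z0) * p3 z0 + p2 z0 * (z0 * deriv p3 z0)"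
      unfolding w_def ddf e2 by (simp add: algebra_simps)
    have w: "w = p2 z0 * (of_real A * cis (s*c) * (of_real A * cis (s*c) + \<i> * of_real (s*t)))"
    proof -
      have "w = p2 z0 * (p3 z0 * (p3 z0 + \<i> * of_real (s*t)))"
        unfolding w1 e1 dz by (simp add: t_def algebra_simps)
      then show ?thesis unfolding pz by (simp add: A_def c_def)
    qed
    have Apos: "0 < A" using apos by (simp add: A_def)
    have k0: "0 \<le> k"
    proof -
      have "0 \<le> real n * (a + 1/a)/2" using apos by simp
      then show ?thesis using k by linarith
    qed
    have t0: "0 \<le> t" using k0 \<mu> by (simp add: t_def)
    have c: "0 < c" "c \<le> pi/2" using \<mu> by (auto simp: c_def)
    define \<theta> where "\<theta> = pi/2 - arctan (A * cos c / (A * sin c + t))"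
    have Rw: "Re w = cmod w * cos (s * Arg (p2 z0) + c + \<theta>)"
      unfolding w \<theta>_def by (rule G2[OF s Apos t0 c p2nz[OF z0]])
    have argu: "\<bar>Arg (p2 z0)\<bar> < pi/2*\<gamma>"
    proof -
      have "0 < pi/2*\<gamma>" "pi/2*\<gamma> \<le> pi" using \<gamma>0 \<gamma>1 by auto
      moreover have "cmod (p2 z0) * cos (pi/2*\<gamma>) < Re (p2 z0)" using S2[OF z0] by (simp add: mult.commute)
      ultimately show ?thesis using sector_iff[of "pi/2*\<gamma>" "p2 z0"] by blast
    qed
    have sarg: "\<bar>s * Arg (p2 z0)\<bar> < pi/2*\<gamma>" using s argu by auto
    have sc: "0 < sin c" using c by (intro sin_gt_zero) auto
    have cc: "0 \<le> cos c" using c by (intro cos_ge_zero) auto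
    have ACt: "A * Cc \<le> t"
    proof (cases "\<mu> < 1")
      case True
      have am: "a powr \<mu> * (1 / (1 - \<mu>) * ((1 - \<mu>) / (1 + \<mu>)) powr ((1 + \<mu>) / 2)) \<le> (a + 1/a) / 2"
        by (rule amgm_mu[OF \<mu>(1) True apos])
      have "A * Cc = (real n * \<mu>) * (a powr \<mu> * (1 / (1 - \<mu>) * ((1 - \<mu>) / (1 + \<mu>)) powr ((1 + \<mu>) / 2)))"
        by (simp add: A_def Cc_def)
      also have "\<dots> \<le> (real n * \<mu>) * ((a + 1/a) / 2)" using am \<mu> by (intro mult_left_mono) auto
      also have "\<dots> = \<mu> * (real n * (a + 1/a)/2)" by simp
      also have "\<dots> \<le> \<mu> * k" using k \<mu> by (intro mult_left_mono) auto
      finally show ?thesis by (simp add: t_def mult.commute)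
    next
      case False
      then have "\<mu> = 1" using \<mu> by simp
      then have "Cc = 0" by (simp add: Cc_def)
      then show ?thesis using t0 by simp
    qed
    have xy: "A * cos c / (A * sin c + t) \<le> cos c / (sin c + Cc)"
    proof -
      have "A * cos c / (A * sin c + t) \<le> A * cos c / (A * sin c + A * Cc)"
        using ACt Apos sc cc Cc0 t0 by (intro divide_left_mono) (auto intro!: mult_pos_pos add_pos_nonneg)
      also have "\<dots> = cos c / (sin c + Cc)" using Apos by (simp add: distrib_left[symmetric])
      finally show ?thesis .
    qed
    have cmuc: "c = \<mu> * pi / 2" by (simp add: c_def)
    have phic: "phi n \<mu> \<le> c + \<theta>"
    proof -
      have "arctan (A * cos c / (A * sin c + t)) \<le> arctan (cos c / (sin c + Cc))"
        by (rule arctan_monotone'[OF xy])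
      then show ?thesis unfolding phidef \<theta>_def cmuc[symmetric] by (simp add: c_def field_simps)
    qed
    have th2: "\<theta> \<le> pi/2"
    proof -
      have "0 \<le> A * cos c / (A * sin c + t)" using Apos cc sc t0 by (intro divide_nonneg_pos) (auto intro!: add_pos_nonneg)
      then show ?thesis by (simp add: \<theta>_def zero_le_arctan_iff)
    qed
    have cb: "cos (s * Arg (p2 z0) + c + \<theta>) \<le> cos (pi / 2 * \<alpha>)"
    proof (rule cos_le_range)
      show "0 \<le> pi / 2 * \<alpha>" "pi / 2 * \<alpha> \<le> pi" using \<alpha>0 \<alpha>2 by auto
      show "pi / 2 * \<alpha> \<le> s * Arg (p2 z0) + c + \<theta>" using phic phiA sarg by (simp add: field_simps abs_less_iff)
      have "pi/2 * (\<alpha> + \<gamma> + \<mu> + 1) \<le> pi/2 * 4" using ag2 \<mu> by (intro mult_left_mono) auto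
      then show "s * Arg (p2 z0) + c + \<theta> \<le> 2 * pi - pi / 2 * \<alpha>"
        using th2 sarg by (simp add: c_def field_simps abs_less_iff)
    qed
    have "Re w \<le> cmod w * cos (pi / 2 * \<alpha>)" unfolding Rw by (rule mult_left_mono[OF cb norm_ge_zero])
    then show False using hyp[OF z0] by (simp add: w_def)
  qed
  show ?thesis unfolding STS_def
  proof (intro CollectI conjI ballI impI fA)
    fix z :: complex assume zb: "z \<in> ball 0 1" and z0: "z \<noteq> 0"
    show fz: "f z \<noteq> 0" using fp2[OF zb] z0 p2nz[OF zb] by simp
    have eq: "z * deriv f z / f z = p3 z" using fp2[OF zb] z0 p2nz[OF zb] by (simp add: p3_def)
    have "0 < pi / 2 * \<mu>" "pi / 2 * \<mu> \<le> pi" using \<mu> by auto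
    moreover have "cmod (p3 z) * cos (pi / 2 * \<mu>) < Re (p3 z)" using S3[OF zb] by (simp add: mult.commute)
    ultimately have "p3 z \<noteq> 0 \<and> \<bar>Arg (p3 z)\<bar> < pi / 2 * \<mu>" using sector_iff[of "pi / 2 * \<mu>" "p3 z"] by blast
    then show "z * deriv f z / f z \<noteq> 0" "\<bar>Arg (z * deriv f z / f z)\<bar> < pi / 2 * \<mu>" unfolding eq by auto
  qed
qed


end
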